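(* Let $T_M>0$, $c>0$, and let $f$ be the solution of $$f''(y)-cf'(y)-f^4(y)=-\int_0^\infty E(y-\eta)f^4(\eta)d\eta\ (y>0),\qquad f(0)=T_M,\qquad f\ge0,$$ obtained by the iterative construction described in the context, and let $\lambda>0$ be such that $\lambda\le f\le T_M$. Then there exist $\varepsilon_0=\varepsilon_0(c,\lambda,T_M)>0$ and, for each $\varepsilon<\varepsilon_0$, a number $L_0=L_0(\varepsilon,\lambda,T_M,c)>0$ such that the following holds. For $a>L_0$ let $\tilde f(y):=f(a+y)$. Then $\tilde f:[-a,\infty)\to\mathbb R_+$ solves $$-\tilde f''(y)+c\tilde f'(y)+\tilde f^4(y)-\int_{-a}^\infty E(\eta-y)\tilde f^4(\eta)d\eta=0,$$ with $\tilde f(-a)=T_M$ and $0<\lambda\le\tilde f\le T_M$; moreover, if $\operatorname{osc}_{[-L,L]}\tilde f<\varepsilon$ for some $L$ with $L_0<L<a$, then $\operatorname{osc}_{[L,\infty)}\tilde f<3\varepsilon$.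
   Context: $E(x)=\frac12\int_{|x|}^\infty\frac{e^{-t}}{t}dt$. Iterative construction: $f_0=0$ and, for $n\ge0$, $f_{n+1}$ is the unique minimizer over $\{f\ge0: f\in W^{1,2}(e^{-cy}dy,\mathbb R_+)\cap L^5(e^{-cy}dy,\mathbb R_+),\ f(0)=T_M\}$ of $\int_0^\infty e^{-cy}\big(\frac{(f')^2}{2}+\frac{f^5}{5}+g_nf\big)dy$, $g_n(y)=-\int_0^\infty E(y-\eta)f_n^4(\eta)d\eta$; the sequence is increasing, bounded by $T_M$, and $f=\lim_nf_n$. For $I\subseteq\mathbb R$, $\operatorname{osc}_I g=\sup_{y_1,y_2\in I}|g(y_1)-g(y_2)|$. *)

theory Defs
  imports "HOL-Analysis.Analysis"
begin

text \<open>The kernel E(x) = 1/2 * int_{|x|}^infty e^{-t}/t dt (for x = 0 the integral diverges;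
  the Lebesgue integral then gives the junk value 0, which only affects a null set).\<close>
definition E :: "real \<Rightarrow> real" where
  "E x = (1/2) * (LINT t:{\<bar>x\<bar>..}|lborel. exp (- t) / t)"

definition osc :: "real set \<Rightarrow> (real \<Rightarrow> real) \<Rightarrow> real" where
  "osc I g = (SUP y1\<in>I. SUP y2\<in>I. \<bar>g y1 - g y2\<bar>)"

definition gterm :: "(real \<Rightarrow> real) \<Rightarrow> real \<Rightarrow> real" where
  "gterm h y = - (LINT \<eta>:{0..}|lborel. E (y - \<eta>) * h \<eta> ^ 4)"

text \<open>Admissible class: h with weak derivative h' (h absolutely continuous on [0,infty)),
  h, h' in L^2(e^{-cy}dy, R_+), h in L^5(e^{-cy}dy, R_+), h \<ge> 0, h(0) = T_M.
  Functions are normalized to be 0 on the negative half-line.\<close>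
definition admissible :: "real \<Rightarrow> real \<Rightarrow> (real \<Rightarrow> real) \<Rightarrow> (real \<Rightarrow> real) \<Rightarrow> bool" where
  "admissible TM c h h' \<longleftrightarrow>
     (\<forall>y<0. h y = 0) \<and>
     continuous_on {0..} h \<and>
     (\<forall>y\<ge>0. 0 \<le> h y) \<and>
     h 0 = TM \<and>
     (\<forall>y\<ge>0. set_integrable lborel {0..y} h' \<and> h y = TM + (LINT t:{0..y}|lborel. h' t)) \<and>
     set_integrable lborel {0..} (\<lambda>y. exp (- c * y) * (h y)\<^sup>2) \<and>
     set_integrable lborel {0..} (\<lambda>y. exp (- c * y) * (h' y)\<^sup>2) \<and>
     set_integrable lborel {0..} (\<lambda>y. exp (- c * y) * \<bar>h y\<bar> ^ 5)"

definition energy :: "real \<Rightarrow> (real \<Rightarrow> real) \<Rightarrow> (real \<Rightarrow> real) \<Rightarrow> (real \<Rightarrow> real) \<Rightarrow> real" where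
  "energy c g h h' =
     (LINT y:{0..}|lborel. exp (- c * y) * ((h' y)\<^sup>2 / 2 + h y ^ 5 / 5 + g y * h y))"

definition is_minimizer :: "real \<Rightarrow> real \<Rightarrow> (real \<Rightarrow> real) \<Rightarrow> (real \<Rightarrow> real) \<Rightarrow> bool" where
  "is_minimizer TM c g h \<longleftrightarrow>
     (\<exists>h'. admissible TM c h h' \<and>
        (\<forall>k k'. admissible TM c k k' \<longrightarrow> energy c g h h' \<le> energy c g k k'))"

primrec fseq :: "real \<Rightarrow> real \<Rightarrow> nat \<Rightarrow> real \<Rightarrow> real" where
  "fseq TM c 0 = (\<lambda>_. 0)"
| "fseq TM c (Suc n) = (THE h. is_minimizer TM c (gterm (fseq TM c n)) h)"

definition flim :: "real \<Rightarrow> real \<Rightarrow> real \<Rightarrow> real" where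
  "flim TM c y = lim (\<lambda>n. fseq TM c n y)"

end

theory Submission
  imports Defs "HOL-Real_Asymp.Real_Asymp"
begin


lemma sets_bl: "sets (borel \<Otimes>\<^sub>M lborel) = sets (borel \<Otimes>\<^sub>M (borel::real measure))"
  by (rule sets_pair_measure_cong) auto
lemma sets_ll: "sets (lborel \<Otimes>\<^sub>M lborel) = sets (borel \<Otimes>\<^sub>M (borel::real measure))"
  by (rule sets_pair_measure_cong) auto

lemma E_meas[measurable]: "E \<in> borel_measurable borel"
proof -
  have "(\<lambda>p::real\<times>real. (if \<bar>fst p\<bar> \<le> snd p then 1 else 0) * (exp (- snd p) / snd p)) \<in> borel_measurable (borel \<Otimes>\<^sub>M borel)"
    by measurable
  then have m: "(\<lambda>(x::real, t::real). indicator {\<bar>x\<bar>..} t * (exp (- t) / t)) \<in> borel_measurable (borel \<Otimes>\<^sub>M lborel)"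
    using measurable_cong_sets[OF sets_bl refl] by (simp add: indicator_def split_beta')
  have m2: "(\<lambda>x::real. integral\<^sup>L lborel (\<lambda>t::real. indicator {\<bar>x\<bar>..} t * (exp (- t) / t))) \<in> borel_measurable borel"
    by (rule lborel.borel_measurable_lebesgue_integral[OF m])
  have eq: "E = (\<lambda>x. 1/2 * integral\<^sup>L lborel (\<lambda>t. indicator {\<bar>x\<bar>..} t * (exp (- t) / t)))"
    unfolding E_def[abs_def] set_lebesgue_integral_def by simp
  show ?thesis unfolding eq by (intro borel_measurable_times borel_measurable_const m2)
qed

lemma E_nonneg: "0 \<le> E x"
  unfolding E_def set_lebesgue_integral_def
  by (auto intro!: integral_nonneg_AE simp: indicator_def)

lemma E_even: "E (- x) = E x"
  unfolding E_def by simp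

lemma exp_nn: "(\<integral>\<^sup>+t. ennreal (indicator {r..} t * exp (- t)) \<partial>lborel) = ennreal (exp (- (r::real)))"
proof -
  have "((\<lambda>t. exp (- 1 * t)) has_integral exp (- 1 * r) / 1) {r..}"
    by (rule has_integral_exp_minus_to_infinity) simp
  then have "integral\<^sup>N lborel (\<lambda>x. indicator {r..} x * exp (- 1 * x)) = exp (- 1 * r) / 1"
    by (intro nn_integral_has_integral_lebesgue) auto
  then show ?thesis by simp
qed

lemma exp_int: "set_integrable lborel {r..} (\<lambda>t::real. exp (- t))"
  and exp_int_val: "(LINT t:{r..}|lborel. exp (- t)) = exp (- r)"
proof -
  have "(\<integral>\<^sup>+t. ennreal (indicator {r..} t * exp (- t)) \<partial>lborel) = ennreal (exp (- r))"
    by (rule exp_nn)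
  then have "integrable lborel (\<lambda>t. indicator {r..} t * exp (- t)) \<and> integral\<^sup>L lborel (\<lambda>t. indicator {r..} t * exp (- t)) = exp (- r)"
    by (subst (asm) nn_integral_eq_integrable) auto
  then show "set_integrable lborel {r..} (\<lambda>t. exp (- t))" "(LINT t:{r..}|lborel. exp (- t)) = exp (- r)"
    unfolding set_integrable_def set_lebesgue_integral_def by auto
qed

lemma Eint: fixes r :: real assumes "r > 0" shows "set_integrable lborel {r..} (\<lambda>t. exp (- t) / t)"
proof (rule set_integrable_bound[where f="\<lambda>t. exp (- t) / r"])
  show "set_integrable lborel {r..} (\<lambda>t. exp (- t) / r)"
    using set_integrable_divide[of r lborel "{r..}" "\<lambda>t. exp (- t)"] exp_int[of r] by simp
  show "set_borel_measurable lborel {r..} (\<lambda>t. exp (- t) / t)"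
    unfolding set_borel_measurable_def by measurable
  show "AE x in lborel. x \<in> {r..} \<longrightarrow> norm (exp (- x) / x) \<le> norm (exp (- x) / r)"
    using assms by (auto intro!: AE_I2 divide_left_mono)
qed

lemma E_ennreal: assumes "x \<noteq> 0"
  shows "ennreal (E x) = ennreal (1/2) * (\<integral>\<^sup>+t. ennreal (indicator {\<bar>x\<bar>..} t * (exp (- t) / t)) \<partial>lborel)"
proof -
  have i: "integrable lborel (\<lambda>t. indicator {\<bar>x\<bar>..} t * (exp (- t) / t))"
    using Eint[of "\<bar>x\<bar>"] assms unfolding set_integrable_def by simp
  have "(\<integral>\<^sup>+t. ennreal (indicator {\<bar>x\<bar>..} t * (exp (- t) / t)) \<partial>lborel)
        = ennreal (integral\<^sup>L lborel (\<lambda>t. indicator {\<bar>x\<bar>..} t * (exp (- t) / t)))"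
    by (rule nn_integral_eq_integral[OF i]) (auto simp: indicator_def)
  moreover have "E x = 1/2 * integral\<^sup>L lborel (\<lambda>t. indicator {\<bar>x\<bar>..} t * (exp (- t) / t))"
    unfolding E_def set_lebesgue_integral_def by simp
  moreover have "0 \<le> integral\<^sup>L lborel (\<lambda>t. indicator {\<bar>x\<bar>..} t * (exp (- t) / t))"
    by (auto intro!: integral_nonneg_AE simp: indicator_def)
  ultimately show ?thesis
    by (simp only:) (rule ennreal_mult, auto)
qed

lemma E_nn: "(\<integral>\<^sup>+x. ennreal (E x) \<partial>lborel) = 1"
proof -
  define G where "G = (\<lambda>x t::real. ennreal (indicator {\<bar>x\<bar>..} t * (exp (- t) / t)))"
  have "(\<lambda>p::real\<times>real. ennreal ((if \<bar>fst p\<bar> \<le> snd p then 1 else 0) * (exp (- snd p) / snd p))) \<in> borel_measurable (borel \<Otimes>\<^sub>M borel)"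
    by measurable
  then have Gm: "case_prod G \<in> borel_measurable (lborel \<Otimes>\<^sub>M lborel)"
    using measurable_cong_sets[OF sets_ll refl] by (simp add: indicator_def split_beta' G_def)
  have "(\<integral>\<^sup>+x. ennreal (E x) \<partial>lborel) = (\<integral>\<^sup>+x. ennreal (1/2) * (\<integral>\<^sup>+t. G x t \<partial>lborel) \<partial>lborel)"
    by (rule nn_integral_cong_AE) (use AE_lborel_singleton[of 0] in \<open>auto elim!: eventually_mono simp: E_ennreal G_def\<close>)
  also have "\<dots> = ennreal (1/2) * (\<integral>\<^sup>+x. (\<integral>\<^sup>+t. G x t \<partial>lborel) \<partial>lborel)"
    by (rule nn_integral_cmult) (rule lborel.borel_measurable_nn_integral[OF Gm])
  also have "(\<integral>\<^sup>+x. (\<integral>\<^sup>+t. G x t \<partial>lborel) \<partial>lborel) = (\<integral>\<^sup>+t. (\<integral>\<^sup>+x. G x t \<partial>lborel) \<partial>lborel)"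
    using lborel_pair.Fubini'[OF Gm] by simp
  also have "(\<lambda>t. \<integral>\<^sup>+x. G x t \<partial>lborel) = (\<lambda>t. ennreal (2 * (indicator {0<..} t * exp (- t))))"
  proof (rule ext)
    fix t :: real
    show "(\<integral>\<^sup>+x. G x t \<partial>lborel) = ennreal (2 * (indicator {0<..} t * exp (- t)))"
    proof (cases "t > 0")
      case True
      have "(\<lambda>x. G x t) = (\<lambda>x. ennreal (exp (- t) / t) * indicator {-t..t} x)"
        by (rule ext) (auto simp: G_def abs_le_iff split: split_indicator)
      then have "(\<integral>\<^sup>+x. G x t \<partial>lborel) = ennreal (exp (- t) / t) * emeasure lborel {-t..t}"
        by (simp add: nn_integral_cmult_indicator)
      also have "\<dots> = ennreal (exp (- t) / t) * ennreal (2 * t)"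
        using True by simp
      also have "\<dots> = ennreal (exp (- t) / t * (2 * t))"
        by (rule ennreal_mult[symmetric]) (use True in auto)
      also have "exp (- t) / t * (2 * t) = 2 * (indicator {0<..} t * exp (- t))"
        using True by simp
      finally show ?thesis .
    next
      case False
      have "G x t = 0" for x
      proof (cases "\<bar>x\<bar> \<le> t")
        case True then have "t = 0" using False by linarith
        then show ?thesis by (simp add: G_def)
      next
        case False then show ?thesis by (simp add: G_def indicator_def)
      qed
      then have "(\<lambda>x. G x t) = (\<lambda>x. 0)"
        by auto
      moreover have "ennreal (2 * (indicator {0<..} t * exp (- t))) = 0"
        using False by (auto simp: indicator_def)
      ultimately show ?thesis
        by simp
    qed
  qed
  also have "(\<integral>\<^sup>+t. ennreal (2 * (indicator {0<..} t * exp (- t))) \<partial>lborel) = (\<integral>\<^sup>+t. ennreal (2 * (indicator {0..} t * exp (- t))) \<partial>lborel)"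
    by (rule nn_integral_cong_AE) (use AE_lborel_singleton[of 0] in \<open>auto elim!: eventually_mono simp: indicator_def\<close>)
  also have "\<dots> = (\<integral>\<^sup>+t. 2 * ennreal (indicator {0..} t * exp (- t)) \<partial>lborel)"
    by (intro nn_integral_cong) (subst ennreal_mult, auto)
  also have "\<dots> = 2 * (\<integral>\<^sup>+t. ennreal (indicator {0..} t * exp (- t)) \<partial>lborel)"
    by (rule nn_integral_cmult) measurable
  also have "\<dots> = 2 * ennreal (exp (- 0))"
    by (simp only: exp_nn)
  also have "2 * ennreal (exp (- 0)) = ennreal 2" by simp
  also have "ennreal (1/2) * ennreal 2 = ennreal (1/2 * 2)"
    by (rule ennreal_mult[symmetric]) auto
  finally show ?thesis by simp
qed

lemma E_integrable: "integrable lborel E"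
  by (rule integrableI_nonneg) (auto simp: E_nonneg E_nn)

lemma E_total: "integral\<^sup>L lborel E = 1"
  using nn_integral_eq_integral[OF E_integrable] E_nn E_nonneg by simp

lemma E_upper: assumes "1 \<le> \<bar>x\<bar>" shows "E x \<le> exp (- \<bar>x\<bar>) / 2"
proof -
  have "(LINT t:{\<bar>x\<bar>..}|lborel. exp (- t) / t) \<le> (LINT t:{\<bar>x\<bar>..}|lborel. exp (- t))"
  proof (rule set_integral_mono)
    show "set_integrable lborel {\<bar>x\<bar>..} (\<lambda>t. exp (- t) / t)" using assms by (intro Eint) auto
    show "set_integrable lborel {\<bar>x\<bar>..} (\<lambda>t. exp (- t))" by (rule exp_int)
    fix t assume "t \<in> {\<bar>x\<bar>..}"
    then have "1 \<le> t" using assms by auto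
    then show "exp (- t) / t \<le> exp (- t)"
      by (simp add: divide_le_eq)
  qed
  then show ?thesis unfolding E_def exp_int_val by simp
qed

lemma E_lower: assumes "0 < \<bar>x\<bar>" "\<bar>x\<bar> \<le> R" shows "exp (- (R+1)) / (2 * (R+1)) \<le> E x"
proof -
  let ?C = "exp (- (R+1)) / (R+1)"
  have eqC: "(\<lambda>t. indicator {\<bar>x\<bar>..} t *\<^sub>R (indicator {R..R+1} t * ?C)) = (\<lambda>t. indicator {R..R+1} t *\<^sub>R ?C)"
    using assms by (auto simp: indicator_def fun_eq_iff)
  have "(LINT t:{\<bar>x\<bar>..}|lborel. indicator {R..R+1} t * ?C) \<le> (LINT t:{\<bar>x\<bar>..}|lborel. exp (- t) / t)"
  proof (rule set_integral_mono)
    show "set_integrable lborel {\<bar>x\<bar>..} (\<lambda>t. exp (- t) / t)" using assms by (intro Eint) auto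
    show "set_integrable lborel {\<bar>x\<bar>..} (\<lambda>t. indicator {R..R+1} t * ?C)"
      unfolding set_integrable_def eqC
      by (rule integrable_indicator) auto
    fix t assume t: "t \<in> {\<bar>x\<bar>..}"
    show "indicator {R..R+1} t * ?C \<le> exp (- t) / t"
    proof (cases "t \<in> {R..R+1}")
      case True
      then have "0 < t" "t \<le> R + 1" "- (R+1) \<le> - t" using assms by auto
      then show ?thesis using True
        by (auto intro!: frac_le)
    next
      case False then show ?thesis using t assms by auto
    qed
  qed
  moreover have "(LINT t:{\<bar>x\<bar>..}|lborel. indicator {R..R+1} t * ?C) = ?C"
  proof -
    show ?thesis unfolding set_lebesgue_integral_def eqC using assms by simp
  qed
  ultimately have k: "?C \<le> (LINT t:{\<bar>x\<bar>..}|lborel. exp (- t) / t)" by linarith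
  have g: "?C / 2 \<le> (LINT t:{\<bar>x\<bar>..}|lborel. exp (- t) / t) / 2"
    using k by (rule divide_right_mono) simp
  have e2: "exp (- (R+1)) / (2 * (R+1)) = ?C / 2" by simp
  have e3: "E x = (LINT t:{\<bar>x\<bar>..}|lborel. exp (- t) / t) / 2" unfolding E_def by simp
  show ?thesis unfolding e2 e3 by (rule g)
qed

lemma shift_int: "integral\<^sup>L lborel (\<lambda>x. g (x + t)) = integral\<^sup>L lborel (g :: real \<Rightarrow> real)"
  using lborel_integral_real_affine[of 1 g t] by (simp add: add.commute)

lemma refl_int: "integral\<^sup>L lborel (\<lambda>x. g (t - x)) = integral\<^sup>L lborel (g :: real \<Rightarrow> real)"
  using lborel_integral_real_affine[of "-1" g t] by simp

lemma shift_integrable: "integrable lborel (\<lambda>x. g (x + t)) \<longleftrightarrow> integrable lborel (g :: real \<Rightarrow> real)"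
  using lborel_integrable_real_affine_iff[of 1 g t] by (simp add: add.commute)

lemma refl_integrable: "integrable lborel (\<lambda>x. g (t - x)) \<longleftrightarrow> integrable lborel (g :: real \<Rightarrow> real)"
  using lborel_integrable_real_affine_iff[of "-1" g t] by simp

lemma Eind_int: "A \<in> sets borel \<Longrightarrow> integrable lborel (\<lambda>s. indicator A s * E s)"
  using integrable_real_mult_indicator[OF _ E_integrable, of A] by (simp add: mult.commute)

definition Et :: "real \<Rightarrow> real" where
  "Et x = integral\<^sup>L lborel (\<lambda>s. indicator {x..} s * E s)"

lemma Et_nonneg: "0 \<le> Et x"
  unfolding Et_def by (auto intro!: integral_nonneg_AE simp: E_nonneg)

lemma Et_meas[measurable]: "Et \<in> borel_measurable borel"
proof -
  have "(\<lambda>p::real\<times>real. (if fst p \<le> snd p then 1 else 0) * E (snd p)) \<in> borel_measurable (borel \<Otimes>\<^sub>M borel)"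
    by measurable
  then have m: "(\<lambda>(x::real, s::real). indicator {x..} s * E s) \<in> borel_measurable (borel \<Otimes>\<^sub>M lborel)"
    using measurable_cong_sets[OF sets_bl refl] by (simp add: indicator_def split_beta')
  show ?thesis unfolding Et_def[abs_def]
    by (rule lborel.borel_measurable_lebesgue_integral[OF m])
qed

lemma point_int: "integral\<^sup>L lborel (\<lambda>s. indicator {p} s * (g s :: real)) = 0"
proof -
  have "(\<lambda>s. indicator {p} s * g s) = (\<lambda>s. indicator {p} s *\<^sub>R g p)"
    by (auto simp: indicator_def)
  then show ?thesis by simp
qed

lemma Et_open: "integral\<^sup>L lborel (\<lambda>s. indicator {x<..} s * E s) = Et x"
  unfolding Et_def
  by (rule integral_cong_AE) (use AE_lborel_singleton[of x] in \<open>auto elim!: eventually_mono simp: indicator_def\<close>)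

lemma Et_sym: "Et x + Et (- x) = 1"
proof -
  have "Et x = integral\<^sup>L lborel (\<lambda>s. indicator {x..} (0 - s) * E (0 - s))"
    unfolding Et_def by (rule refl_int[symmetric])
  also have "\<dots> = integral\<^sup>L lborel (\<lambda>s. indicator {..-x} s * E s)"
    by (rule Bochner_Integration.integral_cong) (auto simp: E_even indicator_def)
  finally have 1: "Et x = integral\<^sup>L lborel (\<lambda>s. indicator {..-x} s * E s)" .
  have "Et x + Et (- x) = integral\<^sup>L lborel (\<lambda>s. indicator {..-x} s * E s + indicator {-x..} s * E s)"
    unfolding 1 by (subst Et_def, rule Bochner_Integration.integral_add[symmetric]) (auto intro: Eind_int)
  also have "\<dots> = integral\<^sup>L lborel (\<lambda>s. E s + indicator {-x} s * E s)"
    by (rule Bochner_Integration.integral_cong) (auto simp: indicator_def)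
  also have "\<dots> = integral\<^sup>L lborel E + integral\<^sup>L lborel (\<lambda>s. indicator {-x} s * E s)"
    by (rule Bochner_Integration.integral_add) (auto intro: E_integrable Eind_int)
  also have "\<dots> = 1" by (simp only: E_total point_int)
  finally show ?thesis .
qed

lemma Et_mono: "x \<le> y \<Longrightarrow> Et y \<le> Et x"
  unfolding Et_def
  by (rule integral_mono[OF Eind_int Eind_int]) (auto intro!: mult_right_mono simp: E_nonneg indicator_def)

lemma Et_half: "0 \<le> x \<Longrightarrow> Et x \<le> 1/2"
  using Et_sym[of 0] Et_mono[of 0 x] by simp

lemma Et_exp: assumes "1 \<le> x" shows "Et x \<le> exp (- x) / 2"
proof -
  have "Et x \<le> integral\<^sup>L lborel (\<lambda>s. indicator {x..} s * (exp (- s) / 2))"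
    unfolding Et_def
  proof (rule integral_mono)
    show "integrable lborel (\<lambda>s. indicator {x..} s * E s)" by (rule Eind_int) simp
    show "integrable lborel (\<lambda>s. indicator {x..} s * (exp (- s) / 2))"
      using exp_int[of x] unfolding set_integrable_def by simp
    fix s show "indicator {x..} s * E s \<le> indicator {x..} s * (exp (- s) / 2)"
      using E_upper[of s] assms by (auto simp: indicator_def)
  qed
  also have "\<dots> = exp (- x) / 2"
    using exp_int_val[of x] unfolding set_lebesgue_integral_def by simp
  finally show ?thesis .
qed

lemma Et_om: assumes "0 \<le> x" shows "Et x \<le> exp (1 - x) / 2"
proof (cases "1 \<le> x")
  case True
  have "exp (- x) / 2 \<le> exp (1 - x) / 2" by (rule divide_right_mono) simp_all
  then show ?thesis using Et_exp[of x] True by linarith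
next
  case False
  then have "1 \<le> exp (1 - x)" by simp
  then show ?thesis using Et_half[OF assms] by linarith
qed

lemma shiftE: "integral\<^sup>L lborel (\<lambda>y. indicator {z..} y * E (y - \<eta>)) = Et (z - \<eta>)"
proof -
  have "integral\<^sup>L lborel (\<lambda>y. indicator {z..} y * E (y - \<eta>)) = integral\<^sup>L lborel (\<lambda>y. indicator {z..} (y + \<eta>) * E (y + \<eta> - \<eta>))"
    by (rule shift_int[symmetric])
  also have "\<dots> = Et (z - \<eta>)" unfolding Et_def
    by (rule Bochner_Integration.integral_cong) (auto simp: indicator_def)
  finally show ?thesis .
qed

lemma shiftE_open: "integral\<^sup>L lborel (\<lambda>y. indicator {z<..} y * E (y - \<eta>)) = Et (z - \<eta>)"
proof -
  have "integral\<^sup>L lborel (\<lambda>y. indicator {z<..} y * E (y - \<eta>)) = integral\<^sup>L lborel (\<lambda>y. indicator {z<..} (y + \<eta>) * E (y + \<eta> - \<eta>))"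
    by (rule shift_int[symmetric])
  also have "\<dots> = integral\<^sup>L lborel (\<lambda>s. indicator {z - \<eta><..} s * E s)"
    by (rule Bochner_Integration.integral_cong) (auto simp: indicator_def)
  finally show ?thesis by (simp add: Et_open)
qed

lemma shiftE_int: "A \<in> sets borel \<Longrightarrow> integrable lborel (\<lambda>y. indicator A y * E (y - \<eta>))"
proof -
  assume A: "A \<in> sets borel"
  have "integrable lborel (\<lambda>y. indicator ((\<lambda>y. y + \<eta>) -` A) y * E y)"
    by (rule Eind_int, rule measurable_sets_borel[OF _ A]) simp
  then have "integrable lborel (\<lambda>y. indicator ((\<lambda>y. y + \<eta>) -` A) (y - \<eta>) * E (y - \<eta>))"
    using shift_integrable[of "\<lambda>y. indicator ((\<lambda>y. y + \<eta>) -` A) y * E y" "- \<eta>"] by simp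
  then show ?thesis by (simp add: indicator_def)
qed

lemma P_eq: assumes "a \<le> b"
  shows "integral\<^sup>L lborel (\<lambda>y. indicator {a..b} y * E (y - \<eta>)) = Et (a - \<eta>) - Et (b - \<eta>)"
proof -
  have "integral\<^sup>L lborel (\<lambda>y. indicator {a..b} y * E (y - \<eta>))
      = integral\<^sup>L lborel (\<lambda>y. indicator {a..} y * E (y - \<eta>) - indicator {b<..} y * E (y - \<eta>))"
    using assms by (intro Bochner_Integration.integral_cong) (auto simp: indicator_def)
  also have "\<dots> = integral\<^sup>L lborel (\<lambda>y. indicator {a..} y * E (y - \<eta>)) - integral\<^sup>L lborel (\<lambda>y. indicator {b<..} y * E (y - \<eta>))"
    by (rule Bochner_Integration.integral_diff) (auto intro!: shiftE_int)
  finally show ?thesis by (simp add: shiftE shiftE_open)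
qed


lemma Et_ind_int: assumes "A \<in> sets borel" "A \<subseteq> {0..}"
  shows "integrable lborel (\<lambda>x. indicator A x * Et x)"
proof (rule Bochner_Integration.integrable_bound)
  show "integrable lborel (\<lambda>x::real. exp 1 / 2 * (indicator {0..} x * exp (- x)))"
    using exp_int[of 0] unfolding set_integrable_def by simp
  show "(\<lambda>x. indicator A x * Et x) \<in> borel_measurable lborel" using assms(1) by measurable
  show "AE x in lborel. norm (indicator A x * Et x) \<le> norm (exp 1 / 2 * (indicator {0..} x * exp (- x)))"
  proof (rule AE_I2)
    fix x
    show "norm (indicator A x * Et x) \<le> norm (exp 1 / 2 * (indicator {0..} x * exp (- x)))"
    proof (cases "x \<in> A")
      case True
      then have "0 \<le> x" using assms by auto
      then have "Et x \<le> exp (1 - x) / 2" by (rule Et_om)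
      also have "exp (1 - x) = exp 1 * exp (- x)" by (simp add: exp_diff exp_minus field_simps)
      finally show ?thesis using True \<open>0 \<le> x\<close> Et_nonneg[of x] by simp
    qed (simp)
  qed
qed

lemma Et_ind_le: assumes "A \<in> sets borel" "A \<subseteq> {z..}" "0 \<le> z"
  shows "integral\<^sup>L lborel (\<lambda>x. indicator A x * Et x) \<le> exp (1 - z) / 2"
proof -
  have "integral\<^sup>L lborel (\<lambda>x. indicator A x * Et x) \<le> integral\<^sup>L lborel (\<lambda>x. exp 1 / 2 * (indicator {z..} x * exp (- x)))"
  proof (rule integral_mono)
    show "integrable lborel (\<lambda>x. indicator A x * Et x)" using assms by (intro Et_ind_int) auto
    show "integrable lborel (\<lambda>x. exp 1 / 2 * (indicator {z..} x * exp (- x)))"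
      using exp_int[of z] unfolding set_integrable_def by simp
    fix x
    show "indicator A x * Et x \<le> exp 1 / 2 * (indicator {z..} x * exp (- x))"
    proof (cases "x \<in> A")
      case True
      then have "z \<le> x" using assms by auto
      then have "Et x \<le> exp (1 - x) / 2" using assms by (intro Et_om) simp
      also have "exp (1 - x) = exp 1 * exp (- x)" by (simp add: exp_diff exp_minus field_simps)
      finally show ?thesis using True \<open>z \<le> x\<close> by simp
    qed (simp add: indicator_def)
  qed
  also have "\<dots> = exp 1 / 2 * exp (- z)"
    using exp_int_val[of z] unfolding set_lebesgue_integral_def by simp
  also have "\<dots> = exp (1 - z) / 2" by (simp add: exp_diff exp_minus field_simps)
  finally show ?thesis .
qed

lemma Et_ind_nonneg: "0 \<le> integral\<^sup>L lborel (\<lambda>x. indicator A x * Et x)"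
  by (auto intro!: integral_nonneg_AE simp: Et_nonneg)

lemma tail_shift: "integral\<^sup>L lborel (\<lambda>\<eta>. indicator {z + R<..} \<eta> * Et (\<eta> - z)) = integral\<^sup>L lborel (\<lambda>x. indicator {R<..} x * Et x)"
  and tail_shift_int: "0 \<le> R \<Longrightarrow> integrable lborel (\<lambda>\<eta>. indicator {z + R<..} \<eta> * Et (\<eta> - z))"
proof -
  have e: "(\<lambda>\<eta>. indicator {z + R<..} \<eta> * Et (\<eta> - z)) = (\<lambda>\<eta>. (\<lambda>x. indicator {R<..} x * Et x) (\<eta> + (- z)))"
    by (auto simp: indicator_def fun_eq_iff)
  show "integral\<^sup>L lborel (\<lambda>\<eta>. indicator {z + R<..} \<eta> * Et (\<eta> - z)) = integral\<^sup>L lborel (\<lambda>x. indicator {R<..} x * Et x)"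
    unfolding e using shift_int[of "\<lambda>x. indicator {R<..} x * Et x" "- z"] by simp
  assume "0 \<le> R"
  then have "integrable lborel (\<lambda>x. indicator {R<..} x * Et x)" by (intro Et_ind_int) auto
  then show "integrable lborel (\<lambda>\<eta>. indicator {z + R<..} \<eta> * Et (\<eta> - z))"
    unfolding e using shift_integrable[of "\<lambda>x. indicator {R<..} x * Et x" "- z"] by simp
qed

lemma tail_refl: "integral\<^sup>L lborel (\<lambda>\<eta>. indicator {..<z - R} \<eta> * Et (z - \<eta>)) = integral\<^sup>L lborel (\<lambda>x. indicator {R<..} x * Et x)"
  and tail_refl_int: "0 \<le> R \<Longrightarrow> integrable lborel (\<lambda>\<eta>. indicator {..<z - R} \<eta> * Et (z - \<eta>))"
proof -
  have e: "(\<lambda>\<eta>. indicator {..<z - R} \<eta> * Et (z - \<eta>)) = (\<lambda>\<eta>. (\<lambda>x. indicator {R<..} x * Et x) (z - \<eta>))"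
    by (auto simp: indicator_def fun_eq_iff)
  show "integral\<^sup>L lborel (\<lambda>\<eta>. indicator {..<z - R} \<eta> * Et (z - \<eta>)) = integral\<^sup>L lborel (\<lambda>x. indicator {R<..} x * Et x)"
    unfolding e using refl_int[of "\<lambda>x. indicator {R<..} x * Et x" z] by simp
  assume "0 \<le> R"
  then have "integrable lborel (\<lambda>x. indicator {R<..} x * Et x)" by (intro Et_ind_int) auto
  then show "integrable lborel (\<lambda>\<eta>. indicator {..<z - R} \<eta> * Et (z - \<eta>))"
    unfolding e using refl_integrable[of "\<lambda>x. indicator {R<..} x * Et x" z] by simp
qed

lemma E_lt: "integral\<^sup>L lborel (\<lambda>\<eta>. indicator {..<T} \<eta> * E (z - \<eta>)) = Et (z - T)"
proof -
  have e: "(\<lambda>\<eta>. indicator {..<T} \<eta> * E (z - \<eta>)) = (\<lambda>\<eta>. (\<lambda>x. indicator {z - T<..} x * E x) (z - \<eta>))"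
    by (auto simp: indicator_def fun_eq_iff)
  show ?thesis unfolding e using refl_int[of "\<lambda>x. indicator {z - T<..} x * E x" z] Et_open[of "z - T"] by simp
qed

lemma E_lt_int: "integrable lborel (\<lambda>\<eta>. indicator {..<T} \<eta> * E (z - \<eta>))"
proof -
  have e: "(\<lambda>\<eta>. indicator {..<T} \<eta> * E (z - \<eta>)) = (\<lambda>\<eta>. (\<lambda>x. indicator {z - T<..} x * E x) (z - \<eta>))"
    by (auto simp: indicator_def fun_eq_iff)
  show ?thesis unfolding e using refl_integrable[of "\<lambda>x. indicator {z - T<..} x * E x" z] Eind_int[of "{z - T<..}"] by simp
qed

locale kern =
  fixes U :: "real \<Rightarrow> real" and B :: real
  assumes Um[measurable]: "U \<in> borel_measurable borel"
    and U_nonneg: "\<And>x. 0 \<le> U x" and U_le: "\<And>x. U x \<le> B"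
    and U_neg: "\<And>x. x < 0 \<Longrightarrow> U x = 0"
begin

lemma B_nonneg: "0 \<le> B" using U_nonneg[of 0] U_le[of 0] by simp

definition conv :: "real \<Rightarrow> real" where
  "conv y = integral\<^sup>L lborel (\<lambda>\<eta>. E (y - \<eta>) * U \<eta>)"

lemma Erefl_int: "integrable lborel (\<lambda>\<eta>. E (y - \<eta>))"
  using refl_integrable[of E y] E_integrable by simp

lemma conv_int: "integrable lborel (\<lambda>\<eta>. E (y - \<eta>) * U \<eta>)"
proof (rule Bochner_Integration.integrable_bound)
  show "integrable lborel (\<lambda>\<eta>. B * E (y - \<eta>))" using Erefl_int by simp
  show "(\<lambda>\<eta>. E (y - \<eta>) * U \<eta>) \<in> borel_measurable lborel" by measurable
  show "AE x in lborel. norm (E (y - x) * U x) \<le> norm (B * E (y - x))"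
    using U_nonneg U_le E_nonneg B_nonneg
    by (auto intro!: AE_I2 mult_right_mono[OF U_le E_nonneg] simp: abs_mult mult.commute)
qed

lemma conv_meas[measurable]: "conv \<in> borel_measurable borel"
proof -
  have m: "(\<lambda>(y::real, \<eta>::real). E (y - \<eta>) * U \<eta>) \<in> borel_measurable (borel \<Otimes>\<^sub>M lborel)"
    using measurable_cong_sets[OF sets_bl refl] by (simp add: split_beta')
  show ?thesis unfolding conv_def[abs_def]
    by (rule lborel.borel_measurable_lebesgue_integral[OF m])
qed

lemma conv_nonneg: "0 \<le> conv y"
  unfolding conv_def by (auto intro!: integral_nonneg_AE simp: E_nonneg U_nonneg)

lemma Erefl_total: "integral\<^sup>L lborel (\<lambda>\<eta>. E (y - \<eta>)) = 1"
  using refl_int[of E y] E_total by simp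

lemma conv_le: "conv y \<le> B"
proof -
  have "conv y \<le> integral\<^sup>L lborel (\<lambda>\<eta>. B * E (y - \<eta>))"
    unfolding conv_def
  proof (rule integral_mono[OF conv_int])
    show "integrable lborel (\<lambda>\<eta>. B * E (y - \<eta>))" using Erefl_int by simp
    fix x
    have "E (y - x) * U x \<le> E (y - x) * B" by (rule mult_left_mono[OF U_le E_nonneg])
    then show "E (y - x) * U x \<le> B * E (y - x)" by (simp add: mult.commute)
  qed
  also have "\<dots> = B" using Erefl_total by simp
  finally show ?thesis .
qed

lemma fubini: assumes "a \<le> b"
  shows "integral\<^sup>L lborel (\<lambda>y. indicator {a..b} y * conv y) = integral\<^sup>L lborel (\<lambda>\<eta>. U \<eta> * (Et (a - \<eta>) - Et (b - \<eta>)))"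
    and "integrable lborel (\<lambda>\<eta>. U \<eta> * (Et (a - \<eta>) - Et (b - \<eta>)))"
proof -
  define H where "H = (\<lambda>y \<eta>. ennreal (indicator {a..b} y * (E (y - \<eta>) * U \<eta>)))"
  have "(\<lambda>p::real\<times>real. ennreal (indicator {a..b} (fst p) * (E (fst p - snd p) * U (snd p)))) \<in> borel_measurable (borel \<Otimes>\<^sub>M borel)"
    by measurable
  then have Hm: "case_prod H \<in> borel_measurable (lborel \<Otimes>\<^sub>M lborel)"
    using measurable_cong_sets[OF sets_ll refl] by (simp add: split_beta' H_def)
  have iL: "integrable lborel (\<lambda>y. indicator {a..b} y * conv y)"
  proof (rule Bochner_Integration.integrable_bound)
    show "integrable lborel (\<lambda>y. B * indicator {a..b} y)"
      using assms by (simp add: integrable_indicator_iff)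
    show "(\<lambda>y. indicator {a..b} y * conv y) \<in> borel_measurable lborel" by measurable
    show "AE x in lborel. norm (indicator {a..b} x * conv x) \<le> norm (B * indicator {a..b} x)"
      using conv_nonneg conv_le B_nonneg by (auto intro!: AE_I2 simp: indicator_def)
  qed
  have "ennreal (integral\<^sup>L lborel (\<lambda>y. indicator {a..b} y * conv y)) = (\<integral>\<^sup>+y. ennreal (indicator {a..b} y * conv y) \<partial>lborel)"
    by (rule nn_integral_eq_integral[OF iL, symmetric]) (auto intro!: AE_I2 simp: conv_nonneg)
  also have "\<dots> = (\<integral>\<^sup>+y. (\<integral>\<^sup>+\<eta>. H y \<eta> \<partial>lborel) \<partial>lborel)"
  proof (rule nn_integral_cong)
    fix y
    have "(\<integral>\<^sup>+\<eta>. H y \<eta> \<partial>lborel) = ennreal (integral\<^sup>L lborel (\<lambda>\<eta>. indicator {a..b} y * (E (y - \<eta>) * U \<eta>)))"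
      unfolding H_def
      by (rule nn_integral_eq_integral) (auto intro!: AE_I2 conv_int simp: E_nonneg U_nonneg)
    then show "ennreal (indicator {a..b} y * conv y) = (\<integral>\<^sup>+\<eta>. H y \<eta> \<partial>lborel)"
      by (simp add: conv_def)
  qed
  also have "\<dots> = (\<integral>\<^sup>+\<eta>. (\<integral>\<^sup>+y. H y \<eta> \<partial>lborel) \<partial>lborel)"
    using lborel_pair.Fubini'[OF Hm] by simp
  also have "\<dots> = (\<integral>\<^sup>+\<eta>. ennreal (U \<eta> * (Et (a - \<eta>) - Et (b - \<eta>))) \<partial>lborel)"
  proof (rule nn_integral_cong)
    fix \<eta>
    have "(\<integral>\<^sup>+y. H y \<eta> \<partial>lborel) = ennreal (integral\<^sup>L lborel (\<lambda>y. indicator {a..b} y * E (y - \<eta>) * U \<eta>))"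
      unfolding H_def mult.assoc[symmetric]
      by (rule nn_integral_eq_integral) (auto intro!: AE_I2 shiftE_int simp: E_nonneg U_nonneg)
    also have "integral\<^sup>L lborel (\<lambda>y. indicator {a..b} y * E (y - \<eta>) * U \<eta>) = U \<eta> * (Et (a - \<eta>) - Et (b - \<eta>))"
      using P_eq[OF assms, of \<eta>] by (simp add: mult.commute)
    finally show "(\<integral>\<^sup>+y. H y \<eta> \<partial>lborel) = ennreal (U \<eta> * (Et (a - \<eta>) - Et (b - \<eta>)))" .
  qed
  finally have eq: "(\<integral>\<^sup>+\<eta>. ennreal (U \<eta> * (Et (a - \<eta>) - Et (b - \<eta>))) \<partial>lborel) = ennreal (integral\<^sup>L lborel (\<lambda>y. indicator {a..b} y * conv y))" ..
  have nn: "0 \<le> U \<eta> * (Et (a - \<eta>) - Et (b - \<eta>))" for \<eta>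
    using Et_mono[of "a - \<eta>" "b - \<eta>"] assms U_nonneg by auto
  have "integrable lborel (\<lambda>\<eta>. U \<eta> * (Et (a - \<eta>) - Et (b - \<eta>))) \<and> integral\<^sup>L lborel (\<lambda>\<eta>. U \<eta> * (Et (a - \<eta>) - Et (b - \<eta>))) = integral\<^sup>L lborel (\<lambda>y. indicator {a..b} y * conv y)"
    using eq by (subst (asm) nn_integral_eq_integrable) (auto intro!: AE_I2 nn integral_nonneg_AE simp: conv_nonneg)
  then show "integral\<^sup>L lborel (\<lambda>y. indicator {a..b} y * conv y) = integral\<^sup>L lborel (\<lambda>\<eta>. U \<eta> * (Et (a - \<eta>) - Et (b - \<eta>)))"
    and "integrable lborel (\<lambda>\<eta>. U \<eta> * (Et (a - \<eta>) - Et (b - \<eta>)))" by auto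
qed


lemma conv_ind_int: "a \<le> b \<Longrightarrow> integrable lborel (\<lambda>y. indicator {a..b} y * conv y)"
proof (rule Bochner_Integration.integrable_bound)
  assume "a \<le> b"
  then show "integrable lborel (\<lambda>y. B * indicator {a..b} y)"
    by (simp add: integrable_indicator_iff)
  show "(\<lambda>y. indicator {a..b} y * conv y) \<in> borel_measurable lborel" by measurable
  show "AE x in lborel. norm (indicator {a..b} x * conv x) \<le> norm (B * indicator {a..b} x)"
    using conv_nonneg conv_le B_nonneg by (auto intro!: AE_I2 simp: indicator_def)
qed

lemma U_ind_int: "a \<le> b \<Longrightarrow> integrable lborel (\<lambda>y. indicator {a..b} y * U y)"
proof (rule Bochner_Integration.integrable_bound)
  assume "a \<le> b"
  then show "integrable lborel (\<lambda>y. B * indicator {a..b} y)"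
    by (simp add: integrable_indicator_iff)
  show "(\<lambda>y. indicator {a..b} y * U y) \<in> borel_measurable lborel" by measurable
  show "AE x in lborel. norm (indicator {a..b} x * U x) \<le> norm (B * indicator {a..b} x)"
    using U_nonneg U_le B_nonneg by (auto intro!: AE_I2 simp: indicator_def)
qed

definition d :: "real \<Rightarrow> real \<Rightarrow> real" where
  "d z \<eta> = indicator {z..} \<eta> - Et (z - \<eta>)"

lemma d_meas[measurable]: "(\<lambda>\<eta>. d z \<eta>) \<in> borel_measurable borel"
  unfolding d_def by measurable

lemma d_abs: "\<bar>d z \<eta>\<bar> = Et \<bar>\<eta> - z\<bar>"
proof (cases "z \<le> \<eta>")
  case True
  have "Et (\<eta> - z) + Et (- (\<eta> - z)) = 1" by (rule Et_sym)
  then have "d z \<eta> = Et (\<eta> - z)" using True by (simp add: d_def)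
  then show ?thesis using True Et_nonneg[of "\<eta> - z"] by simp
next
  case False
  then show ?thesis using Et_nonneg[of "z - \<eta>"] by (simp add: d_def)
qed

lemma Et_abs_exp: "Et \<bar>x\<bar> \<le> exp (1 - \<bar>x\<bar>) / 2"
  by (rule Et_om) simp

lemma d_bound: "\<bar>d z \<eta>\<bar> \<le> exp (1 + z) / 2 * exp (- \<eta>)"
proof -
  have "\<bar>d z \<eta>\<bar> \<le> exp (1 - \<bar>\<eta> - z\<bar>) / 2" using d_abs Et_abs_exp by simp
  also have "\<dots> \<le> exp (1 + z - \<eta>) / 2" by simp
  also have "exp (1 + z - \<eta>) = exp (1 + z) * exp (- \<eta>)" by (simp add: exp_diff exp_minus field_simps)
  finally show ?thesis by simp
qed

lemma expint0: "integrable lborel (\<lambda>\<eta>::real. indicator {0..} \<eta> * exp (- \<eta>))"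
  using exp_int[of 0] unfolding set_integrable_def by simp

lemma Ud_int: "integrable lborel (\<lambda>\<eta>. U \<eta> * d z \<eta>)"
proof (rule Bochner_Integration.integrable_bound)
  show "integrable lborel (\<lambda>\<eta>. B * exp (1 + z) / 2 * (indicator {0..} \<eta> * exp (- \<eta>)))"
    using expint0 by simp
  show "(\<lambda>\<eta>. U \<eta> * d z \<eta>) \<in> borel_measurable lborel" by measurable
  show "AE x in lborel. norm (U x * d z x) \<le> norm (B * exp (1 + z) / 2 * (indicator {0..} x * exp (- x)))"
  proof (rule AE_I2)
    fix x
    show "norm (U x * d z x) \<le> norm (B * exp (1 + z) / 2 * (indicator {0..} x * exp (- x)))"
    proof (cases "0 \<le> x")
      case True
      have "\<bar>U x * d z x\<bar> = U x * \<bar>d z x\<bar>" using U_nonneg by (simp add: abs_mult)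
      also have "\<dots> \<le> B * (exp (1 + z) / 2 * exp (- x))"
        by (rule mult_mono[OF U_le d_bound B_nonneg]) simp
      finally show ?thesis using True B_nonneg by simp
    next
      case False then show ?thesis using U_neg[of x] by simp
    qed
  qed
qed

definition F :: "real \<Rightarrow> real" where
  "F z = integral\<^sup>L lborel (\<lambda>\<eta>. U \<eta> * d z \<eta>)"

lemma identity: assumes "a \<le> b"
  shows "integral\<^sup>L lborel (\<lambda>y. indicator {a..b} y * (U y - conv y)) = F a - F b"
proof -
  have "integral\<^sup>L lborel (\<lambda>y. indicator {a..b} y * (U y - conv y))
      = integral\<^sup>L lborel (\<lambda>y. indicator {a..b} y * U y - indicator {a..b} y * conv y)"
    by (simp add: algebra_simps)
  also have "\<dots> = integral\<^sup>L lborel (\<lambda>y. indicator {a..b} y * U y) - integral\<^sup>L lborel (\<lambda>y. indicator {a..b} y * conv y)"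
    by (rule Bochner_Integration.integral_diff[OF U_ind_int[OF assms] conv_ind_int[OF assms]])
  also have "\<dots> = integral\<^sup>L lborel (\<lambda>y. indicator {a..b} y * U y) - integral\<^sup>L lborel (\<lambda>\<eta>. U \<eta> * (Et (a - \<eta>) - Et (b - \<eta>)))"
    by (simp only: fubini(1)[OF assms])
  also have "\<dots> = integral\<^sup>L lborel (\<lambda>\<eta>. indicator {a..b} \<eta> * U \<eta> - U \<eta> * (Et (a - \<eta>) - Et (b - \<eta>)))"
    by (rule Bochner_Integration.integral_diff[OF U_ind_int[OF assms] fubini(2)[OF assms], symmetric])
  also have "\<dots> = integral\<^sup>L lborel (\<lambda>\<eta>. U \<eta> * d a \<eta> - U \<eta> * d b \<eta>)"
  proof (rule integral_cong_AE)
    show "(\<lambda>\<eta>. indicator {a..b} \<eta> * U \<eta> - U \<eta> * (Et (a - \<eta>) - Et (b - \<eta>))) \<in> borel_measurable lborel"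
      by measurable
    show "(\<lambda>\<eta>. U \<eta> * d a \<eta> - U \<eta> * d b \<eta>) \<in> borel_measurable lborel"
      by measurable
    show "AE x in lborel. indicator {a..b} x * U x - U x * (Et (a - x) - Et (b - x)) = U x * d a x - U x * d b x"
      using AE_lborel_singleton[of b] assms
      by (auto elim!: eventually_mono simp: d_def indicator_def algebra_simps)
  qed
  also have "\<dots> = F a - F b"
    unfolding F_def by (rule Bochner_Integration.integral_diff[OF Ud_int Ud_int])
  finally show ?thesis .
qed


lemma d_ge: "z \<le> \<eta> \<Longrightarrow> d z \<eta> = Et (\<eta> - z)"
  using Et_sym[of "\<eta> - z"] by (simp add: d_def)

lemma d_lt: "\<eta> < z \<Longrightarrow> d z \<eta> = - Et (z - \<eta>)"
  by (simp add: d_def)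

lemma Dint: "integrable lborel (\<lambda>\<eta>. indicator {0..} \<eta> * d z \<eta>)"
proof (rule Bochner_Integration.integrable_bound)
  show "integrable lborel (\<lambda>\<eta>. exp (1 + z) / 2 * (indicator {0..} \<eta> * exp (- \<eta>)))"
    using expint0 by simp
  show "(\<lambda>\<eta>. indicator {0..} \<eta> * d z \<eta>) \<in> borel_measurable lborel" by measurable
  show "AE x in lborel. norm (indicator {0..} x * d z x) \<le> norm (exp (1 + z) / 2 * (indicator {0..} x * exp (- x)))"
    using d_bound[of z] by (auto intro!: AE_I2 simp: indicator_def)
qed

definition D0 :: "real \<Rightarrow> real" where
  "D0 z = integral\<^sup>L lborel (\<lambda>\<eta>. indicator {0..} \<eta> * d z \<eta>)"

lemma D0_bound: assumes "0 \<le> z" shows "0 \<le> D0 z" "D0 z \<le> exp (1 - z) / 2"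
proof -
  have "D0 z = integral\<^sup>L lborel (\<lambda>\<eta>. indicator {z + 0<..} \<eta> * Et (\<eta> - z) - (indicator {..<z - 0} \<eta> * Et (z - \<eta>) - indicator {..<z - z} \<eta> * Et (z - \<eta>)))"
    unfolding D0_def
  proof (rule integral_cong_AE)
    show "(\<lambda>\<eta>. indicator {0..} \<eta> * d z \<eta>) \<in> borel_measurable lborel" by measurable
    show "(\<lambda>\<eta>. indicator {z + 0<..} \<eta> * Et (\<eta> - z) - (indicator {..<z - 0} \<eta> * Et (z - \<eta>) - indicator {..<z - z} \<eta> * Et (z - \<eta>))) \<in> borel_measurable lborel"
      by measurable
    show "AE x in lborel. indicator {0..} x * d z x = indicator {z + 0<..} x * Et (x - z) - (indicator {..<z - 0} x * Et (z - x) - indicator {..<z - z} x * Et (z - x))"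
      using AE_lborel_singleton[of z]
    proof (rule eventually_mono)
      fix x assume "x \<noteq> z"
      then consider "z < x" | "0 \<le> x" "x < z" | "x < 0" by linarith
      then show "indicator {0..} x * d z x = indicator {z + 0<..} x * Et (x - z) - (indicator {..<z - 0} x * Et (z - x) - indicator {..<z - z} x * Et (z - x))"
        by cases (use assms in \<open>auto simp: d_ge d_lt\<close>)
    qed
  qed
  also have "\<dots> = integral\<^sup>L lborel (\<lambda>\<eta>. indicator {z + 0<..} \<eta> * Et (\<eta> - z)) - (integral\<^sup>L lborel (\<lambda>\<eta>. indicator {..<z - 0} \<eta> * Et (z - \<eta>)) - integral\<^sup>L lborel (\<lambda>\<eta>. indicator {..<z - z} \<eta> * Et (z - \<eta>)))"
  proof -
    have i1: "integrable lborel (\<lambda>\<eta>. indicator {z + 0<..} \<eta> * Et (\<eta> - z))" by (rule tail_shift_int) simp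
    have i2: "integrable lborel (\<lambda>\<eta>. indicator {..<z - 0} \<eta> * Et (z - \<eta>))" by (rule tail_refl_int) simp
    have i3: "integrable lborel (\<lambda>\<eta>. indicator {..<z - z} \<eta> * Et (z - \<eta>))" by (rule tail_refl_int) (use assms in simp)
    show ?thesis
      by (subst Bochner_Integration.integral_diff[OF i1 Bochner_Integration.integrable_diff[OF i2 i3]], subst Bochner_Integration.integral_diff[OF i2 i3], rule refl)
  qed
  also have "\<dots> = integral\<^sup>L lborel (\<lambda>x. indicator {z<..} x * Et x)"
    using tail_shift[of z 0] tail_refl[of z 0] tail_refl[of z z] by simp
  finally have e: "D0 z = integral\<^sup>L lborel (\<lambda>x. indicator {z<..} x * Et x)" .
  show "0 \<le> D0 z" unfolding e by (rule Et_ind_nonneg)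
  show "D0 z \<le> exp (1 - z) / 2" unfolding e by (rule Et_ind_le) (use assms in auto)
qed

definition Af :: "real \<Rightarrow> real \<Rightarrow> real \<Rightarrow> real" where
  "Af z K R = integral\<^sup>L lborel (\<lambda>\<eta>. indicator {z - R..z + R} \<eta> * (\<bar>U \<eta> - K\<bar> * E (z - \<eta>)))"

lemma Af_int: assumes "0 \<le> K" "K \<le> B"
  shows "integrable lborel (\<lambda>\<eta>. indicator {z - R..z + R} \<eta> * (\<bar>U \<eta> - K\<bar> * E (z - \<eta>)))"
proof (rule Bochner_Integration.integrable_bound)
  show "integrable lborel (\<lambda>\<eta>. B * E (z - \<eta>))" using Erefl_int by simp
  show "(\<lambda>\<eta>. indicator {z - R..z + R} \<eta> * (\<bar>U \<eta> - K\<bar> * E (z - \<eta>))) \<in> borel_measurable lborel" by measurable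
  show "AE x in lborel. norm (indicator {z - R..z + R} x * (\<bar>U x - K\<bar> * E (z - x))) \<le> norm (B * E (z - x))"
  proof (rule AE_I2)
    fix x
    have "\<bar>U x - K\<bar> \<le> B" using U_nonneg[of x] U_le[of x] assms by auto
    then have "\<bar>U x - K\<bar> * E (z - x) \<le> B * E (z - x)" by (rule mult_right_mono) (rule E_nonneg)
    then show "norm (indicator {z - R..z + R} x * (\<bar>U x - K\<bar> * E (z - x))) \<le> norm (B * E (z - x))"
      using E_nonneg[of "z - x"] B_nonneg by (auto simp: indicator_def abs_mult)
  qed
qed

lemma flux: assumes z: "0 \<le> z" and R: "0 < R" and K: "0 \<le> K" "K \<le> B"
  shows "\<bar>F z\<bar> \<le> K * (exp (1 - z) / 2) + B * exp (1 - R) + (R + 1) * exp (R + 1) * Af z K R"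
proof -
  define cR where "cR = (R + 1) * exp (R + 1)"
  have cR: "0 \<le> cR" using R by (simp add: cR_def)
  define g where "g = (\<lambda>\<eta>. (U \<eta> - K * indicator {0..} \<eta>) * d z \<eta>)"
  have gint: "integrable lborel g"
  proof -
    have "integrable lborel (\<lambda>\<eta>. U \<eta> * d z \<eta> - K * (indicator {0..} \<eta> * d z \<eta>))"
      by (intro Bochner_Integration.integrable_diff Bochner_Integration.integrable_mult_right Ud_int Dint)
    moreover have "(\<lambda>\<eta>. U \<eta> * d z \<eta> - K * (indicator {0..} \<eta> * d z \<eta>)) = g"
      by (auto simp: g_def algebra_simps fun_eq_iff)
    ultimately show ?thesis by simp
  qed
  have Fg: "F z - K * D0 z = integral\<^sup>L lborel g"
  proof -
    have "integral\<^sup>L lborel g = integral\<^sup>L lborel (\<lambda>\<eta>. U \<eta> * d z \<eta> - K * (indicator {0..} \<eta> * d z \<eta>))"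
      by (rule Bochner_Integration.integral_cong) (auto simp: g_def algebra_simps)
    also have "\<dots> = F z - K * D0 z"
      unfolding F_def D0_def
      by (subst Bochner_Integration.integral_diff) (use Ud_int Dint in auto)
    finally show ?thesis by simp
  qed
  define h where "h = (\<lambda>\<eta>. cR * (indicator {z - R..z + R} \<eta> * (\<bar>U \<eta> - K\<bar> * E (z - \<eta>)))
       + B * (indicator {z + R<..} \<eta> * Et (\<eta> - z) + indicator {..<z - R} \<eta> * Et (z - \<eta>)))"
  have hint: "integrable lborel h"
    unfolding h_def using Af_int[OF K] tail_shift_int[of R z] tail_refl_int[of R z] R by auto
  have "\<bar>integral\<^sup>L lborel g\<bar> \<le> integral\<^sup>L lborel (\<lambda>\<eta>. \<bar>g \<eta>\<bar>)"
    using integral_norm_bound[of lborel g] by simp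
  also have "\<dots> \<le> integral\<^sup>L lborel h"
  proof (rule integral_mono_AE)
    show "integrable lborel (\<lambda>\<eta>. \<bar>g \<eta>\<bar>)" using gint by auto
    show "integrable lborel h" by (rule hint)
    show "AE x in lborel. \<bar>g x\<bar> \<le> h x"
      using AE_lborel_singleton[of z]
    proof (rule eventually_mono)
      fix x assume xz: "x \<noteq> z"
      have n1: "0 \<le> cR * (indicator {z - R..z + R} x * (\<bar>U x - K\<bar> * E (z - x)))"
        using cR E_nonneg[of "z - x"] by auto
      have n2: "0 \<le> B * (indicator {z + R<..} x * Et (x - z) + indicator {..<z - R} x * Et (z - x))"
        using B_nonneg Et_nonneg[of "x - z"] Et_nonneg[of "z - x"] by auto
      have gx: "\<bar>g x\<bar> = \<bar>U x - K * indicator {0..} x\<bar> * Et \<bar>x - z\<bar>"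
        by (simp add: g_def abs_mult d_abs)
      have uk: "\<bar>U x - K * indicator {0..} x\<bar> \<le> B"
        using U_nonneg[of x] U_le[of x] K by (auto simp: indicator_def)
      consider "\<bar>x - z\<bar> \<le> R" | "z + R < x" | "x < z - R" by linarith
      then show "\<bar>g x\<bar> \<le> h x"
      proof cases
        case 1
        have uk2: "\<bar>U x - K * indicator {0..} x\<bar> \<le> \<bar>U x - K\<bar>"
          using U_neg[of x] K by (cases "0 \<le> x") (auto simp: indicator_def)
        have "Et \<bar>x - z\<bar> \<le> 1/2" by (rule Et_half) simp
        have El: "exp (- (R+1)) / (2 * (R+1)) \<le> E (z - x)"
          using E_lower[of "z - x" R] 1 xz by (simp add: abs_minus_commute)
        have "cR * (exp (- (R+1)) / (2 * (R+1))) = (R+1) * (exp (R+1) * exp (- (R+1))) / (2 * (R+1))"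
          unfolding cR_def by (simp only: times_divide_eq_right mult.assoc)
        also have "\<dots> = (R+1) / (2 * (R+1))" by (simp only: exp_minus_inverse mult_1_right)
        also have "\<dots> = 1/2" using R by simp
        finally have "cR * (exp (- (R+1)) / (2 * (R+1))) = 1/2" .
        moreover have "cR * (exp (- (R+1)) / (2 * (R+1))) \<le> cR * E (z - x)"
          by (rule mult_left_mono[OF El cR])
        ultimately have half: "1/2 \<le> cR * E (z - x)" by linarith
        have "\<bar>g x\<bar> \<le> \<bar>U x - K\<bar> * (1/2)"
          unfolding gx by (rule mult_mono[OF uk2 \<open>Et \<bar>x - z\<bar> \<le> 1/2\<close>]) (auto simp: Et_nonneg)
        also have "\<dots> \<le> \<bar>U x - K\<bar> * (cR * E (z - x))"
          by (rule mult_left_mono[OF half]) simp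
        also have "\<dots> = cR * (indicator {z - R..z + R} x * (\<bar>U x - K\<bar> * E (z - x)))"
          using 1 by (simp add: indicator_def abs_le_iff)
        finally show ?thesis unfolding h_def using n2 by linarith
      next
        case 2
        then have "\<bar>g x\<bar> \<le> B * Et (x - z)"
          unfolding gx using mult_right_mono[OF uk Et_nonneg[of "\<bar>x - z\<bar>"]] R by simp
        also have "\<dots> = B * (indicator {z + R<..} x * Et (x - z) + indicator {..<z - R} x * Et (z - x))"
          using 2 R by (simp add: indicator_def)
        finally show ?thesis unfolding h_def using n1 by linarith
      next
        case 3
        then have "\<bar>g x\<bar> \<le> B * Et (z - x)"
          unfolding gx using mult_right_mono[OF uk Et_nonneg[of "\<bar>x - z\<bar>"]] R by (simp add: abs_minus_commute)
        also have "\<dots> = B * (indicator {z + R<..} x * Et (x - z) + indicator {..<z - R} x * Et (z - x))"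
          using 3 R by (simp add: indicator_def)
        finally show ?thesis unfolding h_def using n1 by linarith
      qed
    qed
  qed
  also have "integral\<^sup>L lborel h = cR * Af z K R + B * (2 * integral\<^sup>L lborel (\<lambda>x. indicator {R<..} x * Et x))"
    unfolding h_def Af_def
    using Af_int[OF K, of z R] tail_shift_int[of R z] tail_refl_int[of R z] R tail_shift[of z R] tail_refl[of z R]
    by simp
  also have "\<dots> \<le> cR * Af z K R + B * exp (1 - R)"
  proof -
    have "integral\<^sup>L lborel (\<lambda>x. indicator {R<..} x * Et x) \<le> exp (1 - R) / 2"
      by (rule Et_ind_le) (use R in auto)
    then show ?thesis using B_nonneg by (simp add: mult_left_mono)
  qed
  finally have A: "\<bar>F z - K * D0 z\<bar> \<le> cR * Af z K R + B * exp (1 - R)" unfolding Fg .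
  have "\<bar>K * D0 z\<bar> = K * D0 z" using D0_bound(1)[OF z] K by simp
  also have "\<dots> \<le> K * (exp (1 - z) / 2)"
    by (rule mult_left_mono[OF D0_bound(2)[OF z] K(1)])
  finally have "\<bar>K * D0 z\<bar> \<le> K * (exp (1 - z) / 2)" .
  then show ?thesis using A unfolding cR_def by linarith
qed


lemma indE_int: "A \<in> sets borel \<Longrightarrow> integrable lborel (\<lambda>\<eta>. indicator A \<eta> * E (z - \<eta>))"
proof (rule Bochner_Integration.integrable_bound)
  show "integrable lborel (\<lambda>\<eta>. E (z - \<eta>))" by (rule Erefl_int)
  assume "A \<in> sets borel"
  then show "(\<lambda>\<eta>. indicator A \<eta> * E (z - \<eta>)) \<in> borel_measurable lborel" by measurable
  show "AE x in lborel. norm (indicator A x * E (z - x)) \<le> norm (E (z - x))"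
    by (auto intro!: AE_I2 simp: indicator_def)
qed

lemma indEU_int: "A \<in> sets borel \<Longrightarrow> integrable lborel (\<lambda>\<eta>. indicator A \<eta> * (E (z - \<eta>) * U \<eta>))"
proof (rule Bochner_Integration.integrable_bound)
  show "integrable lborel (\<lambda>\<eta>. E (z - \<eta>) * U \<eta>)" by (rule conv_int)
  assume "A \<in> sets borel"
  then show "(\<lambda>\<eta>. indicator A \<eta> * (E (z - \<eta>) * U \<eta>)) \<in> borel_measurable lborel" by measurable
  show "AE x in lborel. norm (indicator A x * (E (z - x) * U x)) \<le> norm (E (z - x) * U x)"
    by (auto intro!: AE_I2 simp: indicator_def)
qed

lemma L1: "integral\<^sup>L lborel (\<lambda>\<eta>. indicator {T..} \<eta> * E (z - \<eta>)) = 1 - Et (z - T)"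
proof -
  have "integral\<^sup>L lborel (\<lambda>\<eta>. indicator {T..} \<eta> * E (z - \<eta>)) = integral\<^sup>L lborel (\<lambda>\<eta>. E (z - \<eta>) - indicator {..<T} \<eta> * E (z - \<eta>))"
    by (rule Bochner_Integration.integral_cong) (auto simp: indicator_def)
  also have "\<dots> = 1 - Et (z - T)"
    by (subst Bochner_Integration.integral_diff[OF Erefl_int E_lt_int]) (simp add: Erefl_total E_lt)
  finally show ?thesis .
qed

lemma L2: "integral\<^sup>L lborel (\<lambda>\<eta>. indicator {T..} \<eta> * (E (z - \<eta>) * U \<eta>)) = conv z - integral\<^sup>L lborel (\<lambda>\<eta>. indicator {..<T} \<eta> * (E (z - \<eta>) * U \<eta>))"
proof -
  have "integral\<^sup>L lborel (\<lambda>\<eta>. indicator {T..} \<eta> * (E (z - \<eta>) * U \<eta>)) = integral\<^sup>L lborel (\<lambda>\<eta>. E (z - \<eta>) * U \<eta> - indicator {..<T} \<eta> * (E (z - \<eta>) * U \<eta>))"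
    by (rule Bochner_Integration.integral_cong) (auto simp: indicator_def)
  also have "\<dots> = conv z - integral\<^sup>L lborel (\<lambda>\<eta>. indicator {..<T} \<eta> * (E (z - \<eta>) * U \<eta>))"
    unfolding conv_def by (rule Bochner_Integration.integral_diff[OF conv_int indEU_int]) simp
  finally show ?thesis .
qed

lemma L3: "0 \<le> integral\<^sup>L lborel (\<lambda>\<eta>. indicator {..<T} \<eta> * (E (z - \<eta>) * U \<eta>))"
  "integral\<^sup>L lborel (\<lambda>\<eta>. indicator {..<T} \<eta> * (E (z - \<eta>) * U \<eta>)) \<le> B * Et (z - T)"
proof -
  show "0 \<le> integral\<^sup>L lborel (\<lambda>\<eta>. indicator {..<T} \<eta> * (E (z - \<eta>) * U \<eta>))"
    by (auto intro!: integral_nonneg_AE simp: E_nonneg U_nonneg)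
  have "integral\<^sup>L lborel (\<lambda>\<eta>. indicator {..<T} \<eta> * (E (z - \<eta>) * U \<eta>)) \<le> integral\<^sup>L lborel (\<lambda>\<eta>. B * (indicator {..<T} \<eta> * E (z - \<eta>)))"
  proof (rule integral_mono)
    show "integrable lborel (\<lambda>\<eta>. indicator {..<T} \<eta> * (E (z - \<eta>) * U \<eta>))" by (rule indEU_int) simp
    show "integrable lborel (\<lambda>\<eta>. B * (indicator {..<T} \<eta> * E (z - \<eta>)))" using E_lt_int by simp
    fix x
    have "E (z - x) * U x \<le> E (z - x) * B" by (rule mult_left_mono[OF U_le E_nonneg])
    then show "indicator {..<T} x * (E (z - x) * U x) \<le> B * (indicator {..<T} x * E (z - x))"
      by (simp add: indicator_def mult.commute)
  qed
  also have "\<dots> = B * Et (z - T)" by (simp add: E_lt)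
  finally show "integral\<^sup>L lborel (\<lambda>\<eta>. indicator {..<T} \<eta> * (E (z - \<eta>) * U \<eta>)) \<le> B * Et (z - T)" .
qed

lemma flat_max: assumes "T \<le> z - R" "0 < R" "\<And>\<eta>. T \<le> \<eta> \<Longrightarrow> U \<eta> \<le> K" "U z \<le> conv z" "0 \<le> K" "K \<le> B"
  shows "Af z K R \<le> (K - U z) + B * Et (z - T)"
proof -
  have "Af z K R \<le> integral\<^sup>L lborel (\<lambda>\<eta>. K * (indicator {T..} \<eta> * E (z - \<eta>)) - indicator {T..} \<eta> * (E (z - \<eta>) * U \<eta>))"
    unfolding Af_def
  proof (rule integral_mono)
    show "integrable lborel (\<lambda>\<eta>. indicator {z - R..z + R} \<eta> * (\<bar>U \<eta> - K\<bar> * E (z - \<eta>)))"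
      using Af_int assms by auto
    show "integrable lborel (\<lambda>\<eta>. K * (indicator {T..} \<eta> * E (z - \<eta>)) - indicator {T..} \<eta> * (E (z - \<eta>) * U \<eta>))"
      by (intro Bochner_Integration.integrable_diff Bochner_Integration.integrable_mult_right indE_int indEU_int) simp_all
    fix x
    show "indicator {z - R..z + R} x * (\<bar>U x - K\<bar> * E (z - x)) \<le> K * (indicator {T..} x * E (z - x)) - indicator {T..} x * (E (z - x) * U x)"
    proof (cases "T \<le> x")
      case True
      then have "U x \<le> K" using assms by auto
      then have "indicator {z - R..z + R} x * (\<bar>U x - K\<bar> * E (z - x)) \<le> (K - U x) * E (z - x)"
        using E_nonneg[of "z - x"] by (auto simp: indicator_def)
      then show ?thesis using True by (simp add: algebra_simps)
    next
      case False
      then show ?thesis using assms by (auto simp: indicator_def)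
    qed
  qed
  also have "\<dots> = K * (1 - Et (z - T)) - (conv z - integral\<^sup>L lborel (\<lambda>\<eta>. indicator {..<T} \<eta> * (E (z - \<eta>) * U \<eta>)))"
    by (subst Bochner_Integration.integral_diff) (auto intro!: indE_int indEU_int simp: L1 L2)
  also have "\<dots> \<le> (K - U z) + B * Et (z - T)"
  proof -
    have "K * (1 - Et (z - T)) = K - K * Et (z - T)" by (simp add: algebra_simps)
    moreover have "0 \<le> K * Et (z - T)" using assms Et_nonneg[of "z - T"] by simp
    ultimately show ?thesis using L3[of T z] assms by linarith
  qed
  finally show ?thesis .
qed

lemma flat_min: assumes "T \<le> z - R" "0 < R" "\<And>\<eta>. T \<le> \<eta> \<Longrightarrow> K \<le> U \<eta>" "conv z \<le> U z" "0 \<le> K" "K \<le> B"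
  shows "Af z K R \<le> (U z - K) + B * Et (z - T)"
proof -
  have "Af z K R \<le> integral\<^sup>L lborel (\<lambda>\<eta>. indicator {T..} \<eta> * (E (z - \<eta>) * U \<eta>) - K * (indicator {T..} \<eta> * E (z - \<eta>)))"
    unfolding Af_def
  proof (rule integral_mono)
    show "integrable lborel (\<lambda>\<eta>. indicator {z - R..z + R} \<eta> * (\<bar>U \<eta> - K\<bar> * E (z - \<eta>)))"
      using Af_int assms by auto
    show "integrable lborel (\<lambda>\<eta>. indicator {T..} \<eta> * (E (z - \<eta>) * U \<eta>) - K * (indicator {T..} \<eta> * E (z - \<eta>)))"
      by (intro Bochner_Integration.integrable_diff Bochner_Integration.integrable_mult_right indE_int indEU_int) simp_all
    fix x
    show "indicator {z - R..z + R} x * (\<bar>U x - K\<bar> * E (z - x)) \<le> indicator {T..} x * (E (z - x) * U x) - K * (indicator {T..} x * E (z - x))"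
    proof (cases "T \<le> x")
      case True
      then have "K \<le> U x" using assms by auto
      then have "indicator {z - R..z + R} x * (\<bar>U x - K\<bar> * E (z - x)) \<le> (U x - K) * E (z - x)"
        using E_nonneg[of "z - x"] by (auto simp: indicator_def)
      then show ?thesis using True by (simp add: algebra_simps)
    next
      case False
      then show ?thesis using assms by (auto simp: indicator_def)
    qed
  qed
  also have "\<dots> = (conv z - integral\<^sup>L lborel (\<lambda>\<eta>. indicator {..<T} \<eta> * (E (z - \<eta>) * U \<eta>))) - K * (1 - Et (z - T))"
    by (subst Bochner_Integration.integral_diff) (auto intro!: indE_int indEU_int simp: L1 L2)
  also have "\<dots> \<le> (U z - K) + B * Et (z - T)"
  proof -
    have "K * (1 - Et (z - T)) = K - K * Et (z - T)" by (simp add: algebra_simps)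
    moreover have "K * Et (z - T) \<le> B * Et (z - T)" using assms Et_nonneg[of "z - T"] by (intro mult_right_mono) auto
    ultimately show ?thesis using L3[of T z] assms by linarith
  qed
  finally show ?thesis .
qed

end


lemma crit_max:
  fixes g dg ddg :: "real \<Rightarrow> real"
  assumes "q1 < x" "x < q2"
    and der: "\<And>y. q1 < y \<Longrightarrow> y < q2 \<Longrightarrow> (g has_real_derivative dg y) (at y)"
    and der2: "(dg has_real_derivative ddg x) (at x)"
    and mx: "\<And>y. q1 \<le> y \<Longrightarrow> y \<le> q2 \<Longrightarrow> g y \<le> g x"
  shows "dg x = 0" "ddg x \<le> 0"
proof -
  show dg0: "dg x = 0"
  proof (rule DERIV_local_max[OF der[OF assms(1,2)]])
    show "0 < min (x - q1) (q2 - x)" using assms by simp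
    show "\<forall>y. \<bar>x - y\<bar> < min (x - q1) (q2 - x) \<longrightarrow> g y \<le> g x"
      by (auto intro!: mx)
  qed
  show "ddg x \<le> 0"
  proof (rule ccontr)
    assume "\<not> ddg x \<le> 0"
    then have "0 < ddg x" by simp
    from DERIV_pos_inc_right[OF der2 this] obtain e where e: "e > 0" "\<And>h. h > 0 \<Longrightarrow> h < e \<Longrightarrow> dg x < dg (x + h)"
      by blast
    define h where "h = min (e / 2) ((q2 - x) / 2)"
    have h1: "h \<le> e/2" "h \<le> (q2 - x)/2" by (auto simp: h_def min_def)
    have h0: "0 < h" using e assms by (simp add: h_def)
    have "2 * h \<le> e" using h1(1) by (simp add: field_simps)
    then have h2: "h < e" using h0 by linarith
    have "2 * h \<le> q2 - x" using h1(2) by (simp add: field_simps)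
    then have h3: "x + h < q2" using h0 assms(2) by linarith
    note h = h0 h2 h3
    have "\<exists>z. x < z \<and> z < x + h \<and> g (x + h) - g x = (x + h - x) * dg z"
      by (rule MVT2) (use h assms in \<open>auto intro!: der\<close>)
    then obtain z where z: "x < z" "z < x + h" "g (x + h) - g x = h * dg z" by auto
    have "dg x < dg (x + (z - x))" using e(2)[of "z - x"] z h by simp
    then have "0 < dg z" using dg0 by simp
    then have "g x < g (x + h)" using z h by (simp add: algebra_simps)
    moreover have "g (x + h) \<le> g x" using h assms by (intro mx) auto
    ultimately show False by simp
  qed
qed

lemma crit_min:
  fixes g dg ddg :: "real \<Rightarrow> real"
  assumes "q1 < x" "x < q2"
    and der: "\<And>y. q1 < y \<Longrightarrow> y < q2 \<Longrightarrow> (g has_real_derivative dg y) (at y)"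
    and der2: "(dg has_real_derivative ddg x) (at x)"
    and mn: "\<And>y. q1 \<le> y \<Longrightarrow> y \<le> q2 \<Longrightarrow> g x \<le> g y"
  shows "dg x = 0" "0 \<le> ddg x"
proof -
  have der': "\<And>y. q1 < y \<Longrightarrow> y < q2 \<Longrightarrow> ((\<lambda>y. - g y) has_real_derivative - dg y) (at y)"
    by (intro derivative_intros der)
  have der2': "((\<lambda>y. - dg y) has_real_derivative - ddg x) (at x)"
    by (intro derivative_intros der2)
  have "- dg x = 0" "- ddg x \<le> 0"
    using crit_max[of q1 x q2 "\<lambda>y. - g y" "\<lambda>y. - dg y" "\<lambda>y. - ddg y", OF assms(1,2) der' der2'] mn by auto
  then show "dg x = 0" "0 \<le> ddg x" by auto
qed

lemma pow4_diff: fixes x y M :: real assumes "0 \<le> y" "y \<le> x" "x \<le> M"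
  shows "x ^ 4 - y ^ 4 \<le> 4 * M ^ 3 * (x - y)"
proof -
  have "x ^ 4 - y ^ 4 = (x - y) * (x^3 + x^2 * y + x * y^2 + y^3)" by algebra
  also have "\<dots> \<le> (x - y) * (4 * M ^ 3)"
  proof (rule mult_left_mono)
    have x0: "0 \<le> x" using assms by simp
    have a1: "x^2 * y \<le> x^2 * x" by (rule mult_left_mono) (use assms in auto)
    have a2: "y^2 \<le> x^2" by (rule power_mono) (use assms in auto)
    have a3: "x * y^2 \<le> x * x^2" by (rule mult_left_mono[OF a2 x0])
    have a4: "y^3 \<le> x^3" by (rule power_mono) (use assms in auto)
    have a5: "x^3 \<le> M^3" by (rule power_mono) (use assms in auto)
    have "x^2 * x = x^3" by (simp only: power3_eq_cube power2_eq_square mult.assoc)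
    moreover have "x * x^2 = x^3" by (simp only: power3_eq_cube power2_eq_square mult.assoc)
    ultimately have b1: "x^2 * y \<le> x^3" and b2: "x * y^2 \<le> x^3" using a1 a3 by simp_all
    have gen: "\<And>A B C D Mx::real. B \<le> A \<Longrightarrow> C \<le> A \<Longrightarrow> D \<le> A \<Longrightarrow> A \<le> Mx \<Longrightarrow> A + B + C + D \<le> 4 * Mx"
      by linarith
    show "x^3 + x^2 * y + x * y^2 + y^3 \<le> 4 * M ^ 3" by (rule gen[OF b1 b2 a4 a5])
  qed (use assms in simp)
  finally show ?thesis by (simp add: mult.commute)
qed

locale sol =
  fixes f :: "real \<Rightarrow> real" and c TM :: real
  assumes c_pos: "c > 0" and TM_pos: "TM > 0"
    and fd: "\<And>y. y > 0 \<Longrightarrow> (f has_real_derivative deriv f y) (at y)"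
    and fdd: "\<And>y. y > 0 \<Longrightarrow> (deriv f has_real_derivative deriv (deriv f) y) (at y)"
    and feq: "\<And>y. y > 0 \<Longrightarrow> deriv (deriv f) y - c * deriv f y - f y ^ 4 = - (LINT \<eta>:{0..}|lborel. E (y - \<eta>) * f \<eta> ^ 4)"
    and fb: "\<And>y. y \<ge> 0 \<Longrightarrow> 0 \<le> f y \<and> f y \<le> TM"
begin

definition UU :: "real \<Rightarrow> real" where "UU \<eta> = indicator {0..} \<eta> * f \<eta> ^ 4"

lemma f_cont: "continuous_on {0<..} f"
  by (rule continuous_at_imp_continuous_on) (auto intro: DERIV_isCont fd)

lemma UU_meas: "UU \<in> borel_measurable borel"
proof -
  have "(\<lambda>x. indicator {0<..} x *\<^sub>R f x ^ 4) \<in> borel_measurable borel"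
    by (rule borel_measurable_continuous_on_indicator) (auto intro!: continuous_intros f_cont)
  moreover have "UU = (\<lambda>x. indicator {0<..} x *\<^sub>R f x ^ 4 + indicator {0} x * f 0 ^ 4)"
    by (auto simp: UU_def fun_eq_iff indicator_def)
  ultimately show ?thesis by simp
qed

lemma kernU: "kern UU (TM ^ 4)"
proof
  show "UU \<in> borel_measurable borel" by (rule UU_meas)
  fix x
  show "0 \<le> UU x" by (simp add: UU_def)
  show "UU x \<le> TM ^ 4" using fb[of x] by (auto simp: UU_def indicator_def intro: power_mono)
  show "x < 0 \<Longrightarrow> UU x = 0" by (simp add: UU_def)
qed

lemma conv_eq: "(LINT \<eta>:{0..}|lborel. E (y - \<eta>) * f \<eta> ^ 4) = kern.conv UU y"
  unfolding kern.conv_def[OF kernU] set_lebesgue_integral_def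
  by (rule Bochner_Integration.integral_cong) (auto simp: UU_def)

lemma ode: "y > 0 \<Longrightarrow> deriv (deriv f) y - c * deriv f y = UU y - kern.conv UU y"
  using feq[of y] conv_eq[of y] by (simp add: UU_def)

lemma ftc: assumes "0 < a" "a \<le> b"
  shows "integral\<^sup>L lborel (\<lambda>y. indicator {a..b} y * (UU y - kern.conv UU y)) = (deriv f b - c * f b) - (deriv f a - c * f a)"
proof -
  have "((\<lambda>y. deriv (deriv f) y - c * deriv f y) has_integral ((deriv f b - c * f b) - (deriv f a - c * f a))) {a..b}"
  proof (rule fundamental_theorem_of_calculus[OF assms(2)])
    fix x assume "x \<in> {a..b}"
    then have "x > 0" using assms by auto
    have "((\<lambda>y. deriv f y - c * f y) has_real_derivative (deriv (deriv f) x - c * deriv f x)) (at x)"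
      by (rule DERIV_diff[OF fdd DERIV_cmult[OF fd]]) (use \<open>x > 0\<close> in auto)
    then show "((\<lambda>y. deriv f y - c * f y) has_vector_derivative (deriv (deriv f) x - c * deriv f x)) (at x within {a..b})"
      by (simp add: has_real_derivative_iff_has_vector_derivative has_vector_derivative_at_within)
  qed
  then have hi: "((\<lambda>y. UU y - kern.conv UU y) has_integral ((deriv f b - c * f b) - (deriv f a - c * f a))) {a..b}"
    by (rule has_integral_eq[rotated]) (use assms in \<open>auto simp: ode\<close>)
  have si: "set_integrable lborel {a..b} (\<lambda>y. UU y - kern.conv UU y)"
    unfolding set_integrable_def
    using Bochner_Integration.integrable_diff[OF kern.U_ind_int[OF kernU assms(2)] kern.conv_ind_int[OF kernU assms(2)]]
    by (simp add: algebra_simps)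
  have "(LINT y:{a..b}|lborel. UU y - kern.conv UU y) = integral {a..b} (\<lambda>y. UU y - kern.conv UU y)"
    by (rule set_borel_integral_eq_integral(2)[OF si])
  also have "\<dots> = (deriv f b - c * f b) - (deriv f a - c * f a)"
    using hi by (rule integral_unique)
  finally show ?thesis unfolding set_lebesgue_integral_def by simp
qed

lemma key: assumes "0 < a" "0 < b" "deriv f a = 0" "deriv f b = 0"
  shows "c * (f a - f b) = kern.F UU a - kern.F UU b"
proof (cases "a \<le> b")
  case True
  show ?thesis using ftc[OF assms(1) True] kern.identity[OF kernU True] assms by (simp add: algebra_simps)
next
  case False
  then have "b \<le> a" by simp
  show ?thesis using ftc[OF assms(2) \<open>b \<le> a\<close>] kern.identity[OF kernU \<open>b \<le> a\<close>] assms by (simp add: algebra_simps)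
qed


lemma Fmax: assumes T: "0 \<le> T" and R: "0 < R" and z: "T + 2 * R \<le> z"
  and S: "\<And>y. T \<le> y \<Longrightarrow> f y \<le> S" and fz: "S - e \<le> f z" and STM: "S \<le> TM"
  and d1: "deriv f z = 0" and d2: "deriv (deriv f) z \<le> 0"
  shows "\<bar>kern.F UU z\<bar> \<le> TM^4 * exp (1 - 2 * R) / 2 + TM^4 * exp (1 - R) + (R + 1) * exp (R + 1) * (4 * TM^3 * e + TM^4 * exp (1 - 2 * R) / 2)"
proof -
  interpret K: kern UU "TM^4" by (rule kernU)
  have z0: "0 < z" using T R z by linarith
  have fz0: "0 \<le> f z" "f z \<le> TM" using fb[of z] z0 by auto
  have Sz: "f z \<le> S" using S z R by auto
  have S0: "0 \<le> S" using Sz fz0 by linarith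
  have Uz: "UU z = f z ^ 4" using z0 by (simp add: UU_def)
  have Uc: "UU z \<le> K.conv z" using ode[OF z0] d1 d2 by simp
  have UK: "UU y \<le> S ^ 4" if "T \<le> y" for y
  proof -
    have "0 \<le> f y" using fb[of y] that T by auto
    then have "f y ^ 4 \<le> S ^ 4" using S[OF that] by (intro power_mono) auto
    then show ?thesis using that T by (simp add: UU_def)
  qed
  have S4: "S ^ 4 \<le> TM ^ 4" using S0 STM by (intro power_mono) auto
  have Af: "K.Af z (S^4) R \<le> (S^4 - UU z) + TM^4 * Et (z - T)"
    by (rule K.flat_max) (use z R UK Uc S0 S4 in auto)
  have "S^4 - UU z \<le> 4 * TM^3 * (S - f z)" unfolding Uz by (rule pow4_diff) (use fz0 Sz STM in auto)
  also have "\<dots> \<le> 4 * TM^3 * e" using fz TM_pos by (intro mult_left_mono) auto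
  finally have a1: "S^4 - UU z \<le> 4 * TM^3 * e" .
  have "Et (z - T) \<le> exp (1 - (z - T)) / 2" by (rule Et_om) (use z R in auto)
  also have "\<dots> \<le> exp (1 - 2 * R) / 2" using z by simp
  finally have a2: "TM^4 * Et (z - T) \<le> TM^4 * (exp (1 - 2 * R) / 2)" using TM_pos by (intro mult_left_mono) auto
  have Afb: "K.Af z (S^4) R \<le> 4 * TM^3 * e + TM^4 * exp (1 - 2 * R) / 2" using Af a1 a2 by simp
  have fl: "\<bar>K.F z\<bar> \<le> S^4 * (exp (1 - z) / 2) + TM^4 * exp (1 - R) + (R + 1) * exp (R + 1) * K.Af z (S^4) R"
    by (rule K.flux) (use z0 R S0 S4 in auto)
  have "S^4 * (exp (1 - z) / 2) \<le> TM^4 * (exp (1 - 2 * R) / 2)"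
    by (rule mult_mono) (use S4 z T in auto)
  moreover have "(R + 1) * exp (R + 1) * K.Af z (S^4) R \<le> (R + 1) * exp (R + 1) * (4 * TM^3 * e + TM^4 * exp (1 - 2 * R) / 2)"
    by (rule mult_left_mono[OF Afb]) (use R in simp)
  ultimately show ?thesis using fl by simp
qed

lemma Fmin: assumes T: "0 \<le> T" and R: "0 < R" and z: "T + 2 * R \<le> z"
  and I: "\<And>y. T \<le> y \<Longrightarrow> I \<le> f y" and fz: "f z \<le> I + e" and I0: "0 \<le> I"
  and d1: "deriv f z = 0" and d2: "0 \<le> deriv (deriv f) z"
  shows "\<bar>kern.F UU z\<bar> \<le> TM^4 * exp (1 - 2 * R) / 2 + TM^4 * exp (1 - R) + (R + 1) * exp (R + 1) * (4 * TM^3 * e + TM^4 * exp (1 - 2 * R) / 2)"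
proof -
  interpret K: kern UU "TM^4" by (rule kernU)
  have z0: "0 < z" using T R z by linarith
  have fz0: "0 \<le> f z" "f z \<le> TM" using fb[of z] z0 by auto
  have Iz: "I \<le> f z" using I z R by auto
  have ITM: "I \<le> TM" using Iz fz0 by linarith
  have Uz: "UU z = f z ^ 4" using z0 by (simp add: UU_def)
  have Uc: "K.conv z \<le> UU z" using ode[OF z0] d1 d2 by simp
  have UK: "I ^ 4 \<le> UU y" if "T \<le> y" for y
  proof -
    have "I ^ 4 \<le> f y ^ 4" using I[OF that] I0 by (intro power_mono) auto
    then show ?thesis using that T by (simp add: UU_def)
  qed
  have I4: "I ^ 4 \<le> TM ^ 4" using I0 ITM by (intro power_mono) auto
  have Af: "K.Af z (I^4) R \<le> (UU z - I^4) + TM^4 * Et (z - T)"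
    by (rule K.flat_min) (use z R UK Uc I0 I4 in auto)
  have "UU z - I^4 \<le> 4 * TM^3 * (f z - I)" unfolding Uz by (rule pow4_diff) (use fz0 Iz I0 in auto)
  also have "\<dots> \<le> 4 * TM^3 * e" using fz TM_pos by (intro mult_left_mono) auto
  finally have a1: "UU z - I^4 \<le> 4 * TM^3 * e" .
  have "Et (z - T) \<le> exp (1 - (z - T)) / 2" by (rule Et_om) (use z R in auto)
  also have "\<dots> \<le> exp (1 - 2 * R) / 2" using z by simp
  finally have a2: "TM^4 * Et (z - T) \<le> TM^4 * (exp (1 - 2 * R) / 2)" using TM_pos by (intro mult_left_mono) auto
  have Afb: "K.Af z (I^4) R \<le> 4 * TM^3 * e + TM^4 * exp (1 - 2 * R) / 2" using Af a1 a2 by simp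
  have fl: "\<bar>K.F z\<bar> \<le> I^4 * (exp (1 - z) / 2) + TM^4 * exp (1 - R) + (R + 1) * exp (R + 1) * K.Af z (I^4) R"
    by (rule K.flux) (use z0 R I0 I4 in auto)
  have "I^4 * (exp (1 - z) / 2) \<le> TM^4 * (exp (1 - 2 * R) / 2)"
    by (rule mult_mono) (use I4 z T in auto)
  moreover have "(R + 1) * exp (R + 1) * K.Af z (I^4) R \<le> (R + 1) * exp (R + 1) * (4 * TM^3 * e + TM^4 * exp (1 - 2 * R) / 2)"
    by (rule mult_left_mono[OF Afb]) (use R in simp)
  ultimately show ?thesis using fl by simp
qed

end




lemma small_R: fixes B \<epsilon> :: real assumes "0 \<le> B" "0 < \<epsilon>"
  shows "\<exists>R>0. B * (exp (1 - 2*R)/2 + exp (1 - R) + (R+1)*exp (R+1)*(exp (1 - 2*R)/2)) < \<epsilon>"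
proof -
  have "((\<lambda>R::real. exp (1 - 2*R)/2 + exp (1 - R) + (R+1)*exp (R+1)*(exp (1 - 2*R)/2)) \<longlongrightarrow> 0) at_top"
    by real_asymp
  then have "((\<lambda>R::real. B * (exp (1 - 2*R)/2 + exp (1 - R) + (R+1)*exp (R+1)*(exp (1 - 2*R)/2))) \<longlongrightarrow> B * 0) at_top"
    by (intro tendsto_mult tendsto_const)
  then have "eventually (\<lambda>R. B * (exp (1 - 2*R)/2 + exp (1 - R) + (R+1)*exp (R+1)*(exp (1 - 2*R)/2)) < \<epsilon>) at_top"
    using assms by (intro order_tendstoD(2)) auto
  moreover have "eventually (\<lambda>R::real. R > 0) at_top" by (rule eventually_gt_at_top)
  ultimately have "eventually (\<lambda>R. R > 0 \<and> B * (exp (1 - 2*R)/2 + exp (1 - R) + (R+1)*exp (R+1)*(exp (1 - 2*R)/2)) < \<epsilon>) at_top"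
    by eventually_elim auto
  then obtain N where "\<forall>R\<ge>N. R > 0 \<and> B * (exp (1 - 2*R)/2 + exp (1 - R) + (R+1)*exp (R+1)*(exp (1 - 2*R)/2)) < \<epsilon>"
    by (auto simp: eventually_at_top_linorder)
  then show ?thesis by auto
qed

context sol begin

theorem cauchy: "\<forall>\<epsilon>>0. \<exists>T. \<forall>x y. T \<le> x \<longrightarrow> T \<le> y \<longrightarrow> \<bar>f x - f y\<bar> < \<epsilon>"
proof (rule ccontr)
  assume "\<not> ?thesis"
  then obtain \<delta> where \<delta>: "\<delta> > 0" and nc: "\<And>T. \<exists>x y. T \<le> x \<and> T \<le> y \<and> \<delta> \<le> \<bar>f x - f y\<bar>"
    by (auto simp: not_less)
  define Sf where "Sf T = Sup (f ` {T..})" for T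
  define If where "If T = Inf (f ` {T..})" for T
  have ba: "bdd_above (f ` {T..})" if "0 \<le> T" for T
    by (rule bdd_aboveI2[of _ _ TM]) (use fb that in auto)
  have bb: "bdd_below (f ` {T..})" if "0 \<le> T" for T
    by (rule bdd_belowI2[of _ 0]) (use fb that in auto)
  have Sup_ge: "f x \<le> Sf T" if "0 \<le> T" "T \<le> x" for T x
    unfolding Sf_def by (rule cSup_upper) (use that ba in auto)
  have Sup_appr: "\<exists>x\<ge>T. v < f x" if "0 \<le> T" "v < Sf T" for T v
    using less_cSupD[of "f ` {T..}" v] that unfolding Sf_def by auto
  have Sf_mono: "Sf T' \<le> Sf T" if "0 \<le> T" "T \<le> T'" for T T'
    unfolding Sf_def by (rule cSup_subset_mono) (use that ba in auto)
  have Sf_b: "0 \<le> Sf T \<and> Sf T \<le> TM" if "0 \<le> T" for T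
  proof
    have "0 \<le> f T" using fb[OF that] by simp
    then show "0 \<le> Sf T" using Sup_ge[OF that order_refl] by linarith
    have "x \<le> TM" if "x \<in> f ` {T..}" for x
    proof -
      obtain y where "T \<le> y" "x = f y" using \<open>x \<in> f ` {T..}\<close> by auto
      then show ?thesis using fb[of y] \<open>0 \<le> T\<close> by auto
    qed
    then show "Sf T \<le> TM" unfolding Sf_def by (intro cSup_least) auto
  qed
  have Inf_le: "If T \<le> f x" if "0 \<le> T" "T \<le> x" for T x
    unfolding If_def by (rule cInf_lower) (use that bb in auto)
  have Inf_appr: "\<exists>x\<ge>T. f x < v" if "0 \<le> T" "If T < v" for T v
    using cInf_lessD[of "f ` {T..}" v] that unfolding If_def by auto
  have If_mono: "If T \<le> If T'" if "0 \<le> T" "T \<le> T'" for T T'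
    unfolding If_def by (rule cInf_superset_mono) (use that bb in auto)
  have If_b: "0 \<le> If T \<and> If T \<le> TM" if "0 \<le> T" for T
  proof
    have "0 \<le> x" if "x \<in> f ` {T..}" for x
    proof -
      obtain y where "T \<le> y" "x = f y" using \<open>x \<in> f ` {T..}\<close> by auto
      then show ?thesis using fb[of y] \<open>0 \<le> T\<close> by auto
    qed
    then show "0 \<le> If T" unfolding If_def by (intro cInf_greatest) auto
    have "f T \<le> TM" using fb[OF that] by simp
    then show "If T \<le> TM" using Inf_le[OF that order_refl] by linarith
  qed
  define M where "M = Inf (Sf ` {0..})"
  define m where "m = Sup (If ` {0..})"
  have M_le: "M \<le> Sf T" if "0 \<le> T" for T
    unfolding M_def by (rule cInf_lower) (use that Sf_b in \<open>auto intro!: bdd_belowI2[of _ 0]\<close>)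
  have M_appr: "\<exists>T\<ge>0. Sf T < M + e" if "0 < e" for e
    using cInf_lessD[of "Sf ` {0..}" "M + e"] that unfolding M_def by auto
  have m_ge: "If T \<le> m" if "0 \<le> T" for T
    unfolding m_def by (rule cSup_upper) (use that If_b in \<open>auto intro!: bdd_aboveI2[of _ _ TM]\<close>)
  have m_appr: "\<exists>T\<ge>0. m - e < If T" if "0 < e" for e
    using less_cSupD[of "If ` {0..}" "m - e"] that unfolding m_def by auto
  obtain R where R: "R > 0" and GR: "TM^4 * (exp (1 - 2*R)/2 + exp (1 - R) + (R+1)*exp (R+1)*(exp (1 - 2*R)/2)) < c * \<delta> / 8"
    using small_R[of "TM^4" "c * \<delta> / 8"] TM_pos c_pos \<delta> by auto
  define cR where "cR = (R+1) * exp (R+1)"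
  have cR0: "0 \<le> cR" using R by (simp add: cR_def)
  define X where "X = cR * TM^3 + 1"
  have "0 \<le> cR * TM^3" using cR0 TM_pos by (intro mult_nonneg_nonneg) auto
  then have X0: "0 < X" by (simp add: X_def)
  define \<eta> where "\<eta> = min (\<delta>/8) (c * \<delta> / (128 * X))"
  have \<eta>0: "0 < \<eta>" using \<delta> c_pos X0 by (simp add: \<eta>_def)
  have \<eta>1: "8 * \<eta> \<le> \<delta>" by (simp add: \<eta>_def min_def field_simps)
  have "X * \<eta> \<le> X * (c * \<delta> / (128 * X))" using X0 by (intro mult_left_mono) (auto simp: \<eta>_def)
  also have "\<dots> = c * \<delta> / 128" using X0 by simp
  finally have \<eta>2: "128 * (X * \<eta>) \<le> c * \<delta>" by (simp add: field_simps)
  have Bd: "TM^4 * exp (1 - 2 * R) / 2 + TM^4 * exp (1 - R) + (R + 1) * exp (R + 1) * (4 * TM^3 * (2 * \<eta>) + TM^4 * exp (1 - 2 * R) / 2) < c * \<delta> / 4"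
  proof -
    have e1: "TM^4 * exp (1 - 2 * R) / 2 + TM^4 * exp (1 - R) + (R + 1) * exp (R + 1) * (4 * TM^3 * (2 * \<eta>) + TM^4 * exp (1 - 2 * R) / 2)
      = TM^4 * (exp (1 - 2*R)/2 + exp (1 - R) + (R+1)*exp (R+1)*(exp (1 - 2*R)/2)) + 8 * (cR * TM^3 * \<eta>)"
      by (simp add: cR_def algebra_simps)
    have "cR * TM^3 * \<eta> \<le> X * \<eta>" using \<eta>0 by (intro mult_right_mono) (auto simp: X_def)
    then have "8 * (cR * TM^3 * \<eta>) \<le> c * \<delta> / 16" using \<eta>2 by (simp add: field_simps)
    moreover have "c * \<delta> / 16 < c * \<delta> / 8" using c_pos \<delta> by simp
    ultimately show ?thesis unfolding e1 using GR by (simp add: field_simps)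
  qed
  obtain T0 where T0: "0 \<le> T0" "Sf T0 < M + \<eta>" using M_appr[OF \<eta>0] by auto
  obtain T0' where T0': "0 \<le> T0'" "m - \<eta> < If T0'" using m_appr[OF \<eta>0] by auto
  define T1 where "T1 = max T0 T0'"
  have T1: "0 \<le> T1" "T0 \<le> T1" "T0' \<le> T1" using T0(1) by (auto simp: T1_def le_max_iff_disj)
  have S1: "Sf T1 < M + \<eta>" using Sf_mono[OF T0(1) T1(2)] T0 by linarith
  have I1: "m - \<eta> < If T1" using If_mono[OF T0'(1) T1(3)] T0' by linarith
  have gap: "\<delta> \<le> Sf T1 - If T1"
  proof -
    obtain x y where "T1 \<le> x" "T1 \<le> y" "\<delta> \<le> \<bar>f x - f y\<bar>" using nc[of T1] by auto
    then show ?thesis using Sup_ge[OF T1(1), of x] Sup_ge[OF T1(1), of y] Inf_le[OF T1(1), of x] Inf_le[OF T1(1), of y]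
      by (auto simp: abs_le_iff)
  qed
  have Mm: "m + \<eta> < M - \<eta>"
  proof -
    have "M - m > \<delta> - 2 * \<eta>" using gap S1 I1 by linarith
    then show ?thesis using \<eta>1 \<eta>0 by linarith
  qed
  define T2 where "T2 = T1 + 2 * R"
  have T2: "0 < T2" using T1 R by (simp add: T2_def)
  have contf: "continuous_on {q..r} f" if "0 < q" for q r
    by (rule continuous_on_subset[OF f_cont]) (use that in auto)
  obtain q1 where q1: "T2 \<le> q1" "f q1 < m + \<eta>"
    using Inf_appr[of T2 "m + \<eta>"] m_ge[of T2] T2 \<eta>0 by force
  obtain p where p: "q1 + 1 \<le> p" "M - \<eta> < f p"
    using Sup_appr[of "q1 + 1" "M - \<eta>"] M_le[of "q1 + 1"] T2 q1 \<eta>0 by force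
  obtain q2 where q2: "p + 1 \<le> q2" "f q2 < m + \<eta>"
    using Inf_appr[of "p + 1" "m + \<eta>"] m_ge[of "p + 1"] T2 q1 p \<eta>0 by force
  obtain a where a: "a \<in> {q1..q2}" "\<And>y. y \<in> {q1..q2} \<Longrightarrow> f y \<le> f a"
    using continuous_attains_sup[of "{q1..q2}" f] contf[of q1 q2] T2 q1 p q2 by auto
  have fa: "M - \<eta> < f a" using a(2)[of p] p q1 q2 by auto
  have a1: "q1 < a" using a fa q1 Mm by (cases "a = q1") auto
  have a2: "a < q2" using a fa q2 Mm by (cases "a = q2") auto
  have da: "deriv f a = 0" "deriv (deriv f) a \<le> 0"
  proof -
    have der: "\<And>y. q1 < y \<Longrightarrow> y < q2 \<Longrightarrow> (f has_real_derivative deriv f y) (at y)"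
      using T2 q1 by (intro fd) linarith
    have der2: "(deriv f has_real_derivative deriv (deriv f) a) (at a)"
      using T2 q1 a1 by (intro fdd) linarith
    show "deriv f a = 0" "deriv (deriv f) a \<le> 0"
      using crit_max[of q1 a q2 f "deriv f" "deriv (deriv f)", OF a1 a2 der der2] a(2) by auto
  qed
  have Fa: "\<bar>kern.F UU a\<bar> < c * \<delta> / 4"
  proof -
    have "\<bar>kern.F UU a\<bar> \<le> TM^4 * exp (1 - 2 * R) / 2 + TM^4 * exp (1 - R) + (R + 1) * exp (R + 1) * (4 * TM^3 * (2 * \<eta>) + TM^4 * exp (1 - 2 * R) / 2)"
    proof (rule Fmax[OF T1(1) R _ _ _ _ da])
      show "T1 + 2 * R \<le> a" using q1 a1 by (simp add: T2_def)
      show "\<And>y. T1 \<le> y \<Longrightarrow> f y \<le> Sf T1" using Sup_ge[OF T1(1)] by auto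
      show "Sf T1 - 2 * \<eta> \<le> f a" using S1 fa by linarith
      show "Sf T1 \<le> TM" using Sf_b[OF T1(1)] by auto
    qed
    then show ?thesis using Bd by linarith
  qed
  obtain r1 where r1: "T2 \<le> r1" "M - \<eta> < f r1"
    using Sup_appr[of T2 "M - \<eta>"] M_le[of T2] T2 \<eta>0 by force
  obtain s where s: "r1 + 1 \<le> s" "f s < m + \<eta>"
    using Inf_appr[of "r1 + 1" "m + \<eta>"] m_ge[of "r1 + 1"] T2 r1 \<eta>0 by force
  obtain r2 where r2: "s + 1 \<le> r2" "M - \<eta> < f r2"
    using Sup_appr[of "s + 1" "M - \<eta>"] M_le[of "s + 1"] T2 r1 s \<eta>0 by force
  obtain b where b: "b \<in> {r1..r2}" "\<And>y. y \<in> {r1..r2} \<Longrightarrow> f b \<le> f y"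
    using continuous_attains_inf[of "{r1..r2}" f] contf[of r1 r2] T2 r1 s r2 by auto
  have fb': "f b < m + \<eta>" using b(2)[of s] s r1 r2 by auto
  have b1: "r1 < b" using b fb' r1 Mm by (cases "b = r1") auto
  have b2: "b < r2" using b fb' r2 Mm by (cases "b = r2") auto
  have db: "deriv f b = 0" "0 \<le> deriv (deriv f) b"
  proof -
    have der: "\<And>y. r1 < y \<Longrightarrow> y < r2 \<Longrightarrow> (f has_real_derivative deriv f y) (at y)"
      using T2 r1 by (intro fd) linarith
    have der2: "(deriv f has_real_derivative deriv (deriv f) b) (at b)"
      using T2 r1 b1 by (intro fdd) linarith
    show "deriv f b = 0" "0 \<le> deriv (deriv f) b"
      using crit_min[of r1 b r2 f "deriv f" "deriv (deriv f)", OF b1 b2 der der2] b(2) by auto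
  qed
  have Fb: "\<bar>kern.F UU b\<bar> < c * \<delta> / 4"
  proof -
    have "\<bar>kern.F UU b\<bar> \<le> TM^4 * exp (1 - 2 * R) / 2 + TM^4 * exp (1 - R) + (R + 1) * exp (R + 1) * (4 * TM^3 * (2 * \<eta>) + TM^4 * exp (1 - 2 * R) / 2)"
    proof (rule Fmin[OF T1(1) R _ _ _ _ db])
      show "T1 + 2 * R \<le> b" using r1 b1 by (simp add: T2_def)
      show "\<And>y. T1 \<le> y \<Longrightarrow> If T1 \<le> f y" using Inf_le[OF T1(1)] by auto
      show "f b \<le> If T1 + 2 * \<eta>" using I1 fb' by linarith
      show "0 \<le> If T1" using If_b[OF T1(1)] by auto
    qed
    then show ?thesis using Bd by linarith
  qed
  have "c * (f a - f b) = kern.F UU a - kern.F UU b"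
    by (rule key) (use T2 q1 a1 r1 b1 da db in auto)
  then have "c * (f a - f b) < c * \<delta> / 2" using Fa Fb by linarith
  moreover have "\<delta> \<le> 2 * (f a - f b)"
  proof -
    have "M - m > \<delta> - 2 * \<eta>" using gap S1 I1 by linarith
    then show ?thesis using fa fb' \<eta>1 by argo
  qed
  then have "c * \<delta> \<le> c * (2 * (f a - f b))" using c_pos by (intro mult_left_mono) auto
  ultimately show False by (simp add: field_simps)
qed
end

lemma osc_le: assumes "I \<noteq> {}" "\<And>y1 y2. y1 \<in> I \<Longrightarrow> y2 \<in> I \<Longrightarrow> \<bar>g y1 - g y2\<bar> \<le> e"
  shows "osc I g \<le> e"
  unfolding osc_def
proof (rule cSUP_least[OF assms(1)])
  fix y1 assume "y1 \<in> I"
  show "(SUP y2\<in>I. \<bar>g y1 - g y2\<bar>) \<le> e"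
    by (rule cSUP_least[OF assms(1)]) (use assms(2) \<open>y1 \<in> I\<close> in auto)
qed

lemma osc_nonneg: assumes "x \<in> I" "\<And>y. y \<in> I \<Longrightarrow> 0 \<le> g y \<and> g y \<le> (B::real)"
  shows "0 \<le> osc I g"
proof -
  have b1: "\<bar>g y1 - g y2\<bar> \<le> B" if "y1 \<in> I" "y2 \<in> I" for y1 y2
    using assms(2)[OF that(1)] assms(2)[OF that(2)] by auto
  have in1: "(SUP y2\<in>I. \<bar>g y1 - g y2\<bar>) \<le> B" if "y1 \<in> I" for y1
    by (rule cSUP_least) (use assms(1) b1 that in auto)
  have "0 \<le> (SUP y2\<in>I. \<bar>g x - g y2\<bar>)"
  proof -
    have "\<bar>g x - g x\<bar> \<le> (SUP y2\<in>I. \<bar>g x - g y2\<bar>)"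
      by (rule cSUP_upper[OF assms(1)]) (use b1 assms(1) in \<open>auto intro!: bdd_aboveI2[of _ _ B]\<close>)
    then show ?thesis by simp
  qed
  also have "\<dots> \<le> (SUP y1\<in>I. SUP y2\<in>I. \<bar>g y1 - g y2\<bar>)"
    by (rule cSUP_upper[OF assms(1)]) (use in1 in \<open>auto intro!: bdd_aboveI2[of _ _ B]\<close>)
  finally show ?thesis unfolding osc_def .
qed

lemma shift_conv: "(LINT \<eta>:{-a..}|lborel. E (\<eta> - y) * f (a + \<eta>) ^ 4) = (LINT \<eta>:{0..}|lborel. E (a + y - \<eta>) * f \<eta> ^ 4)"
proof -
  define g where "g = (\<lambda>\<eta>. indicator {-a..} \<eta> * (E (\<eta> - y) * f (a + \<eta>) ^ 4))"
  have "(LINT \<eta>:{-a..}|lborel. E (\<eta> - y) * f (a + \<eta>) ^ 4) = integral\<^sup>L lborel g"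
    unfolding set_lebesgue_integral_def g_def by simp
  also have "\<dots> = integral\<^sup>L lborel (\<lambda>x. g (x + - a))" by (rule shift_int[symmetric])
  also have "\<dots> = (LINT \<eta>:{0..}|lborel. E (a + y - \<eta>) * f \<eta> ^ 4)"
    unfolding set_lebesgue_integral_def g_def
  proof (rule Bochner_Integration.integral_cong)
    fix x
    have "E (x + - a - y) = E (a + y - x)" using E_even[of "a + y - x"] by (simp add: algebra_simps)
    then show "indicator {-a..} (x + - a) * (E (x + - a - y) * f (a + (x + - a)) ^ 4) = indicator {0..} x *\<^sub>R (E (a + y - x) * f x ^ 4)"
      by (simp add: indicator_def)
  qed simp
  finally show ?thesis .
qed

theorem corollary3p7:
  fixes TM c lam :: real
  defines "f \<equiv> flim TM c"
  assumes TM_pos: "TM > 0" and c_pos: "c > 0" and lam_pos: "lam > 0"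
    and f_eq: "\<forall>y>0. (f has_real_derivative deriv f y) (at y) \<and>
                 (deriv f has_real_derivative deriv (deriv f) y) (at y) \<and>
                 deriv (deriv f) y - c * deriv f y - f y ^ 4
                   = - (LINT \<eta>:{0..}|lborel. E (y - \<eta>) * f \<eta> ^ 4)"
    and f_init: "f 0 = TM"
    and f_bounds: "\<forall>y\<ge>0. lam \<le> f y \<and> f y \<le> TM"
  shows "\<exists>\<epsilon>0>0. \<forall>\<epsilon><\<epsilon>0. \<exists>L0>0. \<forall>a>L0.
           (let ft = (\<lambda>y. f (a + y)) in
             (\<forall>y>-a. (ft has_real_derivative deriv ft y) (at y) \<and>
                 (deriv ft has_real_derivative deriv (deriv ft) y) (at y) \<and>
                 - deriv (deriv ft) y + c * deriv ft y + ft y ^ 4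
                   - (LINT \<eta>:{-a..}|lborel. E (\<eta> - y) * ft \<eta> ^ 4) = 0) \<and>
             ft (-a) = TM \<and>
             (\<forall>y\<ge>-a. 0 < lam \<and> lam \<le> ft y \<and> ft y \<le> TM) \<and>
             (\<forall>L. L0 < L \<and> L < a \<and> osc {-L..L} ft < \<epsilon> \<longrightarrow> osc {L..} ft < 3 * \<epsilon>))"
proof -
  have fd: "\<And>y. y > 0 \<Longrightarrow> (f has_real_derivative deriv f y) (at y)" using f_eq by auto
  have fdd: "\<And>y. y > 0 \<Longrightarrow> (deriv f has_real_derivative deriv (deriv f) y) (at y)" using f_eq by auto
  have feq: "\<And>y. y > 0 \<Longrightarrow> deriv (deriv f) y - c * deriv f y - f y ^ 4 = - (LINT \<eta>:{0..}|lborel. E (y - \<eta>) * f \<eta> ^ 4)"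
    using f_eq by auto
  have fb: "\<And>y. y \<ge> 0 \<Longrightarrow> 0 \<le> f y \<and> f y \<le> TM" using f_bounds lam_pos by fastforce
  interpret S: sol f c TM
    by unfold_locales (use c_pos TM_pos fd fdd feq fb in auto)
  show ?thesis
  proof (rule exI[of _ 1], intro conjI allI impI)
    show "(0::real) < 1" by simp
    fix \<epsilon> :: real assume "\<epsilon> < 1"
    define \<epsilon>' where "\<epsilon>' = (if 0 < \<epsilon> then \<epsilon> else 1)"
    have "\<epsilon>' > 0" by (simp add: \<epsilon>'_def)
    then obtain T where T: "\<And>x y. T \<le> x \<Longrightarrow> T \<le> y \<Longrightarrow> \<bar>f x - f y\<bar> < \<epsilon>'"
      using S.cauchy by blast
    show "\<exists>L0>0. \<forall>a>L0. let ft = (\<lambda>y. f (a + y)) in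
             (\<forall>y>-a. (ft has_real_derivative deriv ft y) (at y) \<and>
                 (deriv ft has_real_derivative deriv (deriv ft) y) (at y) \<and>
                 - deriv (deriv ft) y + c * deriv ft y + ft y ^ 4
                   - (LINT \<eta>:{-a..}|lborel. E (\<eta> - y) * ft \<eta> ^ 4) = 0) \<and>
             ft (-a) = TM \<and>
             (\<forall>y\<ge>-a. 0 < lam \<and> lam \<le> ft y \<and> ft y \<le> TM) \<and>
             (\<forall>L. L0 < L \<and> L < a \<and> osc {-L..L} ft < \<epsilon> \<longrightarrow> osc {L..} ft < 3 * \<epsilon>)"
    proof (intro exI[of _ "max 1 T"] conjI allI impI)
      show "0 < max 1 T" by simp
      fix a assume a: "max 1 T < a"
      define ft where "ft = (\<lambda>y. f (a + y))"
      have dft: "(ft has_real_derivative deriv f (a + y)) (at y)" if "y > - a" for y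
      proof -
        have "(f has_real_derivative deriv f (a + y)) (at (y + a))" using fd[of "a + y"] that by (simp add: add.commute)
        then have "((\<lambda>x. f (x + a)) has_real_derivative deriv f (a + y)) (at y)" by (simp add: DERIV_shift)
        then show ?thesis unfolding ft_def by (simp add: add.commute)
      qed
      have dfteq: "deriv ft y = deriv f (a + y)" if "y > - a" for y
        by (rule DERIV_imp_deriv[OF dft[OF that]])
      have ddft: "(deriv ft has_real_derivative deriv (deriv f) (a + y)) (at y)" if "y > - a" for y
      proof -
        have "(deriv f has_real_derivative deriv (deriv f) (a + y)) (at (y + a))" using fdd[of "a + y"] that by (simp add: add.commute)
        then have "((\<lambda>x. deriv f (x + a)) has_real_derivative deriv (deriv f) (a + y)) (at y)" by (simp add: DERIV_shift)
        then have h: "((\<lambda>x. deriv f (a + x)) has_real_derivative deriv (deriv f) (a + y)) (at y)" by (simp add: add.commute)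
        show ?thesis
          by (rule has_field_derivative_transform_within_open[OF h, of "{-a<..}"]) (use that dfteq in auto)
      qed
      have ddfteq: "deriv (deriv ft) y = deriv (deriv f) (a + y)" if "y > - a" for y
        by (rule DERIV_imp_deriv[OF ddft[OF that]])
      have partA: "\<forall>y>-a. (ft has_real_derivative deriv ft y) (at y) \<and>
                 (deriv ft has_real_derivative deriv (deriv ft) y) (at y) \<and>
                 - deriv (deriv ft) y + c * deriv ft y + ft y ^ 4
                   - (LINT \<eta>:{-a..}|lborel. E (\<eta> - y) * ft \<eta> ^ 4) = 0"
      proof (intro allI impI conjI)
        fix y assume y: "- a < y"
        show "(ft has_real_derivative deriv ft y) (at y)" using dft[OF y] dfteq[OF y] by simp
        show "(deriv ft has_real_derivative deriv (deriv ft) y) (at y)" using ddft[OF y] ddfteq[OF y] by simp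
        have "(LINT \<eta>:{-a..}|lborel. E (\<eta> - y) * ft \<eta> ^ 4) = (LINT \<eta>:{0..}|lborel. E (a + y - \<eta>) * f \<eta> ^ 4)"
          unfolding ft_def by (rule shift_conv)
        moreover have "deriv (deriv f) (a + y) - c * deriv f (a + y) - f (a + y) ^ 4 = - (LINT \<eta>:{0..}|lborel. E (a + y - \<eta>) * f \<eta> ^ 4)"
          using feq[of "a + y"] y by simp
        ultimately show "- deriv (deriv ft) y + c * deriv ft y + ft y ^ 4 - (LINT \<eta>:{-a..}|lborel. E (\<eta> - y) * ft \<eta> ^ 4) = 0"
          using dfteq[OF y] ddfteq[OF y] by (simp add: ft_def)
      qed
      have partB: "ft (-a) = TM" using f_init by (simp add: ft_def)
      have partC: "\<forall>y\<ge>-a. 0 < lam \<and> lam \<le> ft y \<and> ft y \<le> TM"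
        using f_bounds lam_pos by (auto simp: ft_def)
      have partD: "\<forall>L. max 1 T < L \<and> L < a \<and> osc {-L..L} ft < \<epsilon> \<longrightarrow> osc {L..} ft < 3 * \<epsilon>"
      proof (intro allI impI)
        fix L assume L: "max 1 T < L \<and> L < a \<and> osc {-L..L} ft < \<epsilon>"
        show "osc {L..} ft < 3 * \<epsilon>"
        proof (cases "0 < \<epsilon>")
          case True
          have "osc {L..} ft \<le> \<epsilon>"
          proof (rule osc_le)
            show "{L..} \<noteq> {}" by simp
            fix y1 y2 assume "y1 \<in> {L..}" "y2 \<in> {L..}"
            then have "T \<le> a + y1" "T \<le> a + y2" using L a by auto
            then have "\<bar>f (a + y1) - f (a + y2)\<bar> < \<epsilon>'" by (rule T)
            then show "\<bar>ft y1 - ft y2\<bar> \<le> \<epsilon>" using True by (simp add: ft_def \<epsilon>'_def)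
          qed
          then show ?thesis using True by linarith
        next
          case False
          have "0 \<le> osc {-L..L} ft"
          proof (rule osc_nonneg[of 0 _ _ TM])
            show "0 \<in> {-L..L}" using L by auto
            fix y assume "y \<in> {-L..L}"
            then have "0 \<le> a + y" using L by auto
            then show "0 \<le> ft y \<and> ft y \<le> TM" using fb by (simp add: ft_def)
          qed
          then show ?thesis using L False by linarith
        qed
      qed
      show "let ft = (\<lambda>y. f (a + y)) in
             (\<forall>y>-a. (ft has_real_derivative deriv ft y) (at y) \<and>
                 (deriv ft has_real_derivative deriv (deriv ft) y) (at y) \<and>
                 - deriv (deriv ft) y + c * deriv ft y + ft y ^ 4
                   - (LINT \<eta>:{-a..}|lborel. E (\<eta> - y) * ft \<eta> ^ 4) = 0) \<and>
             ft (-a) = TM \<and>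
             (\<forall>y\<ge>-a. 0 < lam \<and> lam \<le> ft y \<and> ft y \<le> TM) \<and>
             (\<forall>L. max 1 T < L \<and> L < a \<and> osc {-L..L} ft < \<epsilon> \<longrightarrow> osc {L..} ft < 3 * \<epsilon>)"
        unfolding Let_def ft_def[symmetric] using partA partB partC partD by blast
    qed
  qed
qed


end
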